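(* Let $R$ be a nonsignaling bipartite resource of type $\mathsf{T}[\mathcal{X}]\,\mathsf{C}\to\mathsf{T}[\mathcal{A}]\,\mathsf{C}$, i.e. Bob's input $\mathcal{Y}$ and output $\mathcal{B}$ are classical, while Alice's input $\mathcal{X}$ and output $\mathcal{A}$ are of arbitrary type, and let $n=d[\mathcal{Y}]$ be the cardinality of Bob's input system. Then $R$ admits an $n$-symmetric extension if and only if $R$ is LOSR-free.
   Context: Systems have a dimension and a type in $\{\mathsf{I},\mathsf{C},\mathsf{Q}\}$ (trivial = dimension 1, classical, quantum). A resource is a completely positive linear map $R$ from operators on $\mathcal{X}\otimes\mathcal{Y}$ to operators on $\mathcal{A}\otimes\mathcal{B}$, trace preserving on product inputs, nonsignaling in both directions ($\mathrm{tr}_{\mathcal{A}}R[\xi\otimes\psi]$ independent of $\xi$, $\mathrm{tr}_{\mathcal{B}}R[\xi\otimes\psi]$ independent of $\psi$), with classicality constraints: for a classical output such as $\mathcal{B}$, $\langle i|R[\cdot]|j\rangle_{\mathcal{B}}=0$ for $i\neq j$; for a classical input such as $\mathcal{Y}$, $R[\xi\otimes|i\rangle\langle j|]=0$ for $i\ne j$. It is LOSR-free if $R=\sum_ip_iR^i_{\mathcal{A}|\mathcal{X}}\otimes R^i_{\mathcal{B}|\mathcal{Y}}$ for a probability distribution and single-party channels of the same types. An $n$-symmetric extension of $R$ is an $(n+1)$-party resource with parties $\mathcal{A}|\mathcal{X},\mathcal{B}_1|\mathcal{Y}_1,\dots,\mathcal{B}_n|\mathcal{Y}_n$ (copies of $\mathcal{B}|\mathcal{Y}$,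 of the same types), nonsignaling from any party to any other, invariant under all joint permutations of the copies, and whose reduction obtained by tracing out $\mathcal{B}_2,\dots,\mathcal{B}_n$ equals $R$. *)

theory Defs
  imports Complex_Main "HOL-Library.FuncSet" "HOL-Combinatorics.Permutations"
begin

datatype stype = TI | TC | TQ   (* trivial, classical, quantum *)

type_synonym system = "nat \<times> stype"

definition sdim :: "system \<Rightarrow> nat" where "sdim s = fst s"
definition styp :: "system \<Rightarrow> stype" where "styp s = snd s"

definition labels :: "system \<Rightarrow> nat set" where "labels s = {..<sdim s}"

definition valid_sys :: "system \<Rightarrow> bool" where
  "valid_sys s \<longleftrightarrow> 0 < sdim s \<and> (styp s = TI \<longrightarrow> sdim s = 1)"

section \<open>Operators and linear maps (in coordinates, relative to a finite carrier of basis labels)\<close>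

type_synonym 'i op = "'i \<Rightarrow> 'i \<Rightarrow> complex"
text \<open>A linear map from operators on basis 'i to operators on basis 'o, given by its
  matrix coefficients: K u u' i i' = <o| K[ |i><i'| ] |u'>.\<close>
type_synonym ('o,'i) kern = "'o \<Rightarrow> 'o \<Rightarrow> 'i \<Rightarrow> 'i \<Rightarrow> complex"

definition app :: "'i set \<Rightarrow> ('o,'i) kern \<Rightarrow> 'i op \<Rightarrow> 'o op" where
  "app SI K \<rho> = (\<lambda>u u'. \<Sum>i\<in>SI. \<Sum>i'\<in>SI. K u u' i i' * \<rho> i i')"

definition op_eq_on :: "'i set \<Rightarrow> 'i op \<Rightarrow> 'i op \<Rightarrow> bool" where
  "op_eq_on S M N \<longleftrightarrow> (\<forall>i\<in>S. \<forall>j\<in>S. M i j = N i j)"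

definition tr :: "'i set \<Rightarrow> 'i op \<Rightarrow> complex" where
  "tr S M = (\<Sum>i\<in>S. M i i)"

definition psd :: "'i set \<Rightarrow> 'i op \<Rightarrow> bool" where
  "psd S M \<longleftrightarrow> (\<forall>v :: 'i \<Rightarrow> complex.
      Im (\<Sum>i\<in>S. \<Sum>j\<in>S. cnj (v i) * M i j * v j) = 0 \<and>
      0 \<le> Re (\<Sum>i\<in>S. \<Sum>j\<in>S. cnj (v i) * M i j * v j))"

definition density :: "'i set \<Rightarrow> 'i op \<Rightarrow> bool" where
  "density S M \<longleftrightarrow> psd S M \<and> tr S M = 1"

definition CP :: "'i set \<Rightarrow> 'o set \<Rightarrow> ('o,'i) kern \<Rightarrow> bool" where
  "CP SI SO K \<longleftrightarrow> (\<forall>(k::nat) (\<sigma> :: (nat \<times> 'i) op).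
      psd ({..<k} \<times> SI) \<sigma> \<longrightarrow>
      psd ({..<k} \<times> SO)
        (\<lambda>(c,u) (c',u'). \<Sum>i\<in>SI. \<Sum>i'\<in>SI. K u u' i i' * \<sigma> (c,i) (c',i')))"

definition ketbra :: "'i \<Rightarrow> 'i \<Rightarrow> 'i op" where
  "ketbra i j = (\<lambda>a b. if a = i \<and> b = j then 1 else 0)"

definition otimes :: "'a op \<Rightarrow> 'b op \<Rightarrow> ('a \<times> 'b) op" where
  "otimes \<xi> \<psi> = (\<lambda>(x,y) (x',y'). \<xi> x x' * \<psi> y y')"

definition ktensor :: "('a,'x) kern \<Rightarrow> ('b,'y) kern \<Rightarrow> ('a \<times> 'b, 'x \<times> 'y) kern" where
  "ktensor KA KB = (\<lambda>(a,b) (a',b') (x,y) (x',y'). KA a a' x x' * KB b b' y y')"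

definition zero_op :: "'i op" where "zero_op = (\<lambda>_ _. 0)"

definition channel :: "system \<Rightarrow> system \<Rightarrow> (nat,nat) kern \<Rightarrow> bool" where
  "channel sX sA K \<longleftrightarrow>
     valid_sys sX \<and> valid_sys sA \<and>
     CP (labels sX) (labels sA) K \<and>
     (\<forall>\<xi>. tr (labels sA) (app (labels sX) K \<xi>) = tr (labels sX) \<xi>) \<and>
     (styp sA = TC \<longrightarrow> (\<forall>\<rho>. \<forall>i\<in>labels sA. \<forall>j\<in>labels sA. i \<noteq> j \<longrightarrow>
        app (labels sX) K \<rho> i j = 0)) \<and>
     (styp sX = TC \<longrightarrow> (\<forall>i\<in>labels sX. \<forall>j\<in>labels sX. i \<noteq> j \<longrightarrow>
        op_eq_on (labels sA) (app (labels sX) K (ketbra i j)) zero_op))"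

definition ptrA2 :: "nat set \<Rightarrow> (nat \<times> nat) op \<Rightarrow> nat op" where
  "ptrA2 SA M = (\<lambda>b b'. \<Sum>a\<in>SA. M (a,b) (a,b'))"

definition ptrB2 :: "nat set \<Rightarrow> (nat \<times> nat) op \<Rightarrow> nat op" where
  "ptrB2 SB M = (\<lambda>a a'. \<Sum>b\<in>SB. M (a,b) (a',b))"

definition resource ::
  "system \<Rightarrow> system \<Rightarrow> system \<Rightarrow> system \<Rightarrow> (nat \<times> nat, nat \<times> nat) kern \<Rightarrow> bool" where
  "resource sX sY sA sB R \<longleftrightarrow>
    (let SX = labels sX; SY = labels sY; SA = labels sA; SB = labels sB;
         RR = app (SX \<times> SY) R in
     valid_sys sX \<and> valid_sys sY \<and> valid_sys sA \<and> valid_sys sB \<and>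
     CP (SX \<times> SY) (SA \<times> SB) R \<and>
     (\<forall>\<xi> \<psi>. tr (SA \<times> SB) (RR (otimes \<xi> \<psi>)) = tr SX \<xi> * tr SY \<psi>) \<and>
     (\<forall>\<xi> \<xi>' \<psi>. density SX \<xi> \<and> density SX \<xi>' \<and> density SY \<psi> \<longrightarrow>
        op_eq_on SB (ptrA2 SA (RR (otimes \<xi> \<psi>))) (ptrA2 SA (RR (otimes \<xi>' \<psi>)))) \<and>
     (\<forall>\<xi> \<psi> \<psi>'. density SX \<xi> \<and> density SY \<psi> \<and> density SY \<psi>' \<longrightarrow>
        op_eq_on SA (ptrB2 SB (RR (otimes \<xi> \<psi>))) (ptrB2 SB (RR (otimes \<xi> \<psi>')))) \<and>
     (styp sA = TC \<longrightarrow> (\<forall>\<rho> a a' b b'. a \<in> SA \<and> a' \<in> SA \<and> b \<in> SB \<and> b' \<in> SB \<and> a \<noteq> a'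
        \<longrightarrow> RR \<rho> (a,b) (a',b') = 0)) \<and>
     (styp sB = TC \<longrightarrow> (\<forall>\<rho> a a' b b'. a \<in> SA \<and> a' \<in> SA \<and> b \<in> SB \<and> b' \<in> SB \<and> b \<noteq> b'
        \<longrightarrow> RR \<rho> (a,b) (a',b') = 0)) \<and>
     (styp sX = TC \<longrightarrow> (\<forall>i\<in>SX. \<forall>j\<in>SX. \<forall>\<psi>. i \<noteq> j \<longrightarrow>
        op_eq_on (SA \<times> SB) (RR (otimes (ketbra i j) \<psi>)) zero_op)) \<and>
     (styp sY = TC \<longrightarrow> (\<forall>i\<in>SY. \<forall>j\<in>SY. \<forall>\<xi>. i \<noteq> j \<longrightarrow>
        op_eq_on (SA \<times> SB) (RR (otimes \<xi> (ketbra i j))) zero_op)))"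

definition LOSR_free ::
  "system \<Rightarrow> system \<Rightarrow> system \<Rightarrow> system \<Rightarrow> (nat \<times> nat, nat \<times> nat) kern \<Rightarrow> bool" where
  "LOSR_free sX sY sA sB R \<longleftrightarrow>
    (\<exists>(m::nat) (p :: nat \<Rightarrow> real) (KA :: nat \<Rightarrow> (nat,nat) kern) (KB :: nat \<Rightarrow> (nat,nat) kern).
       (\<forall>i<m. 0 \<le> p i) \<and> (\<Sum>i<m. p i) = 1 \<and>
       (\<forall>i<m. channel sX sA (KA i) \<and> channel sY sB (KB i)) \<and>
       (\<forall>\<rho>. op_eq_on (labels sA \<times> labels sB)
          (app (labels sX \<times> labels sY) R \<rho>)
          (\<lambda>u u'. \<Sum>i<m. complex_of_real (p i) *
              app (labels sX \<times> labels sY) (ktensor (KA i) (KB i)) \<rho> u u')))"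

section \<open>(n+1)-party resources A|X, B_1|Y_1, ..., B_n|Y_n (copies indexed 0..n-1)\<close>

text \<open>Basis labels of the composite X \<otimes> Y_1 \<otimes> ... \<otimes> Y_n: pairs (x, ys) with ys \<in> PiE.\<close>
definition mlabels :: "nat set \<Rightarrow> nat \<Rightarrow> nat set \<Rightarrow> (nat \<times> (nat \<Rightarrow> nat)) set" where
  "mlabels S0 n S1 = S0 \<times> (PiE {..<n} (\<lambda>_. S1))"

definition prod_in :: "nat op \<Rightarrow> nat \<Rightarrow> (nat \<Rightarrow> nat op) \<Rightarrow> (nat \<times> (nat \<Rightarrow> nat)) op" where
  "prod_in \<xi> n \<psi>s = (\<lambda>(x,ys) (x',ys'). \<xi> x x' * (\<Prod>j<n. \<psi>s j (ys j) (ys' j)))"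

definition ptrA_m :: "nat set \<Rightarrow> (nat \<times> (nat \<Rightarrow> nat)) op \<Rightarrow> (nat \<Rightarrow> nat) op" where
  "ptrA_m SA M = (\<lambda>bs bs'. \<Sum>a\<in>SA. M (a,bs) (a,bs'))"

definition ptrB_m :: "nat set \<Rightarrow> nat \<Rightarrow> (nat \<times> (nat \<Rightarrow> nat)) op \<Rightarrow> (nat \<times> (nat \<Rightarrow> nat)) op" where
  "ptrB_m SB k M = (\<lambda>(a,bs) (a',bs'). \<Sum>b\<in>SB. M (a, bs(k := b)) (a', bs'(k := b)))"

text \<open>Trace out the copies B_2,...,B_n (indices 1..n-1), keeping A and B_1 (index 0).\<close>
definition ptr_rest :: "nat set \<Rightarrow> nat \<Rightarrow> (nat \<times> (nat \<Rightarrow> nat)) op \<Rightarrow> (nat \<times> nat) op" where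
  "ptr_rest SB n M = (\<lambda>(a,b) (a',b').
      \<Sum>bs\<in>{bs \<in> PiE {..<n} (\<lambda>_. SB). bs 0 = b}. M (a,bs) (a', bs(0 := b')))"

definition perm_op :: "(nat \<Rightarrow> nat) \<Rightarrow> (nat \<times> (nat \<Rightarrow> nat)) op \<Rightarrow> (nat \<times> (nat \<Rightarrow> nat)) op" where
  "perm_op \<pi> M = (\<lambda>(x,ys) (x',ys'). M (x, ys \<circ> \<pi>) (x', ys' \<circ> \<pi>))"

definition sym_ext ::
  "system \<Rightarrow> system \<Rightarrow> system \<Rightarrow> system \<Rightarrow> nat \<Rightarrow> (nat \<times> nat, nat \<times> nat) kern
   \<Rightarrow> (nat \<times> (nat \<Rightarrow> nat), nat \<times> (nat \<Rightarrow> nat)) kern \<Rightarrow> bool" where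
  "sym_ext sX sY sA sB n R E \<longleftrightarrow>
    (let SX = labels sX; SY = labels sY; SA = labels sA; SB = labels sB;
         IN = mlabels SX n SY; OUT = mlabels SA n SB;
         EE = app IN E in
     CP IN OUT E \<and>
     \<comment> \<open>trace preserving on product inputs\<close>
     (\<forall>\<xi> \<psi>s. tr OUT (EE (prod_in \<xi> n \<psi>s)) = tr SX \<xi> * (\<Prod>j<n. tr SY (\<psi>s j))) \<and>
     \<comment> \<open>nonsignaling: Alice's input does not influence the rest\<close>
     (\<forall>\<xi> \<xi>' \<psi>s. density SX \<xi> \<and> density SX \<xi>' \<and> (\<forall>j<n. density SY (\<psi>s j)) \<longrightarrow>
        op_eq_on (PiE {..<n} (\<lambda>_. SB))
          (ptrA_m SA (EE (prod_in \<xi> n \<psi>s))) (ptrA_m SA (EE (prod_in \<xi>' n \<psi>s)))) \<and>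
     \<comment> \<open>nonsignaling: the k-th copy's input does not influence the rest\<close>
     (\<forall>k<n. \<forall>\<xi> \<psi>s \<phi>. density SX \<xi> \<and> (\<forall>j<n. density SY (\<psi>s j)) \<and> density SY \<phi> \<longrightarrow>
        op_eq_on OUT
          (ptrB_m SB k (EE (prod_in \<xi> n \<psi>s)))
          (ptrB_m SB k (EE (prod_in \<xi> n (\<psi>s(k := \<phi>)))))) \<and>
     \<comment> \<open>classicality constraints (same types as in R)\<close>
     (styp sA = TC \<longrightarrow> (\<forall>\<rho> a bs a' bs'. (a,bs) \<in> OUT \<and> (a',bs') \<in> OUT \<and> a \<noteq> a'
        \<longrightarrow> EE \<rho> (a,bs) (a',bs') = 0)) \<and>
     (styp sB = TC \<longrightarrow> (\<forall>k<n. \<forall>\<rho> a bs a' bs'. (a,bs) \<in> OUT \<and> (a',bs') \<in> OUT \<and> bs k \<noteq> bs' k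
        \<longrightarrow> EE \<rho> (a,bs) (a',bs') = 0)) \<and>
     (styp sX = TC \<longrightarrow> (\<forall>i\<in>SX. \<forall>j\<in>SX. \<forall>\<psi>s. i \<noteq> j \<longrightarrow>
        op_eq_on OUT (EE (prod_in (ketbra i j) n \<psi>s)) zero_op)) \<and>
     (styp sY = TC \<longrightarrow> (\<forall>k<n. \<forall>i\<in>SY. \<forall>j\<in>SY. \<forall>\<xi> \<psi>s. i \<noteq> j \<longrightarrow>
        op_eq_on OUT (EE (prod_in \<xi> n (\<psi>s(k := ketbra i j)))) zero_op)) \<and>
     \<comment> \<open>invariance under joint permutations of the copies\<close>
     (\<forall>\<pi>. \<pi> permutes {..<n} \<longrightarrow>
        (\<forall>\<rho>. op_eq_on OUT (EE (perm_op \<pi> \<rho>)) (perm_op \<pi> (EE \<rho>)))) \<and>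
     \<comment> \<open>reduction (tracing out B_2..B_n) equals R (tensored with the trace on Y_2..Y_n)\<close>
     (\<forall>\<xi> \<psi>s. op_eq_on (SA \<times> SB)
        (ptr_rest SB n (EE (prod_in \<xi> n \<psi>s)))
        (\<lambda>u u'. app (SX \<times> SY) R (otimes \<xi> (\<psi>s 0)) u u' * (\<Prod>j\<in>{1..<n}. tr SY (\<psi>s j)))))"

end

theory Submission
  imports Defs "HOL-Library.Complex_Order"
begin


definition qf :: "'i set \<Rightarrow> 'i op \<Rightarrow> ('i \<Rightarrow> complex) \<Rightarrow> complex" where
  "qf S M v = (\<Sum>i\<in>S. \<Sum>j\<in>S. cnj (v i) * M i j * v j)"

lemma psd_iff: "psd S M \<longleftrightarrow> (\<forall>v. 0 \<le> qf S M v)"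
  by (auto simp: psd_def qf_def less_eq_complex_def)

lemma sum_supp:
  assumes "finite S" "inj_on f T" "f ` T \<subseteq> S" "\<And>s. s \<in> S \<Longrightarrow> s \<notin> f ` T \<Longrightarrow> g s = 0"
  shows "sum g S = (\<Sum>t\<in>T. g (f t))"
proof -
  have "sum g S = sum g (f ` T)" using assms by (intro sum.mono_neutral_right) auto
  also have "\<dots> = (\<Sum>t\<in>T. g (f t))" using assms(2) by (simp add: sum.reindex)
  finally show ?thesis .
qed

lemma qf_supp:
  assumes "finite S" "inj_on f T" "f ` T \<subseteq> S"
    and z: "\<And>s s'. s \<in> S \<Longrightarrow> s' \<in> S \<Longrightarrow> s \<notin> f ` T \<or> s' \<notin> f ` T \<Longrightarrow> cnj (v s) * M s s' * v s' = 0"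
  shows "qf S M v = qf T (\<lambda>i j. M (f i) (f j)) (v \<circ> f)"
proof -
  have "qf S M v = (\<Sum>t\<in>T. \<Sum>s'\<in>S. cnj (v (f t)) * M (f t) s' * v s')"
    unfolding qf_def using assms by (intro sum_supp) (auto intro!: sum.neutral)
  also have "\<dots> = (\<Sum>t\<in>T. \<Sum>t'\<in>T. cnj (v (f t)) * M (f t) (f t') * v (f t'))"
    using assms by (intro sum.cong refl sum_supp) (auto intro!: sum.neutral)
  finally show ?thesis by (simp add: qf_def)
qed

lemma psd_embed:
  assumes "psd S M" "finite S" "inj_on f T" "f ` T \<subseteq> S"
  shows "psd T (\<lambda>i j. M (f i) (f j))"
  unfolding psd_iff
proof
  fix w :: "_ \<Rightarrow> complex"
  define v where "v = (\<lambda>s. if s \<in> f ` T then w (the_inv_into T f s) else 0)"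
  have vf: "v (f t) = w t" if "t \<in> T" for t
    using that assms(3) by (simp add: v_def the_inv_into_f_f)
  have "qf S M v = qf T (\<lambda>i j. M (f i) (f j)) (v \<circ> f)"
    using assms by (intro qf_supp) (auto simp: v_def)
  also have "\<dots> = qf T (\<lambda>i j. M (f i) (f j)) w"
    unfolding qf_def by (intro sum.cong refl) (simp add: vf)
  finally show "0 \<le> qf T (\<lambda>i j. M (f i) (f j)) w"
    using assms(1) by (metis psd_iff)
qed

lemma psd_ext:
  assumes "psd T M" "finite S" "inj_on f T" "f ` T \<subseteq> S"
    and "\<And>i j. i \<in> T \<Longrightarrow> j \<in> T \<Longrightarrow> N (f i) (f j) = M i j"
    and "\<And>s s'. s \<in> S \<Longrightarrow> s' \<in> S \<Longrightarrow> s \<notin> f ` T \<or> s' \<notin> f ` T \<Longrightarrow> N s s' = 0"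
  shows "psd S N"
  unfolding psd_iff
proof
  fix v :: "_ \<Rightarrow> complex"
  have "qf S N v = qf T (\<lambda>i j. N (f i) (f j)) (v \<circ> f)"
    using assms by (intro qf_supp) auto
  also have "\<dots> = qf T M (v \<circ> f)"
    unfolding qf_def using assms(5) by (intro sum.cong refl) simp
  finally show "0 \<le> qf S N v" using assms(1) by (metis psd_iff)
qed

lemma psd_cong: "op_eq_on S M N \<Longrightarrow> psd S M \<Longrightarrow> psd S N"
  unfolding psd_def op_eq_on_def by (metis (no_types, lifting) sum.cong)

lemma qf_sum: "finite I \<Longrightarrow> qf S (\<lambda>a b. \<Sum>i\<in>I. M i a b) v = (\<Sum>i\<in>I. qf S (M i) v)"
  unfolding qf_def by (simp add: sum_distrib_left sum_distrib_right sum.swap[of _ I])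

lemma psd_sum: "finite I \<Longrightarrow> (\<And>i. i \<in> I \<Longrightarrow> psd S (M i)) \<Longrightarrow> psd S (\<lambda>a b. \<Sum>i\<in>I. M i a b)"
  unfolding psd_iff by (simp add: qf_sum sum_nonneg)

lemma psd_scale: "0 \<le> c \<Longrightarrow> psd S M \<Longrightarrow> psd S (\<lambda>a b. c * M a b)"
proof -
  assume c: "0 \<le> c" and M: "psd S M"
  have "qf S (\<lambda>a b. c * M a b) v = c * qf S M v" for v
    unfolding qf_def by (simp add: sum_distrib_left mult_ac)
  then show ?thesis using c M unfolding psd_iff by (simp add: mult_nonneg_nonneg)
qed

lemma psd_rank1: "psd S (\<lambda>k l. w k * cnj (w l))"
  unfolding psd_iff
proof
  fix v :: "_ \<Rightarrow> complex"
  define z where "z = (\<Sum>i\<in>S. cnj (v i) * w i)"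
  have "qf S (\<lambda>k l. w k * cnj (w l)) v = z * cnj z"
    unfolding qf_def z_def by (simp add: sum_distrib_left sum_distrib_right mult_ac)
  also have "\<dots> = of_real ((norm z)^2)" by (rule complex_norm_square[symmetric])
  finally show "0 \<le> qf S (\<lambda>k l. w k * cnj (w l)) v" by (simp add: less_eq_complex_def)
qed

lemma ketbra_rank1: "ketbra x x = (\<lambda>k l. (\<lambda>i. if i = x then 1 else 0) k * cnj ((\<lambda>i. if i = x then (1::complex) else 0) l))"
  by (auto simp: ketbra_def fun_eq_iff)

lemma psd_ketbra: "psd S (ketbra x x)"
  by (subst ketbra_rank1) (rule psd_rank1)

lemma density_ketbra: "finite S \<Longrightarrow> x \<in> S \<Longrightarrow> density S (ketbra x x)"
  by (simp add: density_def psd_ketbra) (simp add: tr_def ketbra_def)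

lemma psd_diag: assumes "psd S M" "finite S" "i \<in> S" shows "0 \<le> M i i"
proof -
  have e: "cnj ((\<lambda>k. if k = i then 1 else 0) a) * M a b * (\<lambda>k. if k = i then 1 else 0) b
     = (if b = i then (if a = i then M a b else 0) else 0)" for a b by simp
  have "qf S M (\<lambda>k. if k = i then 1 else 0) = M i i"
    using assms unfolding qf_def e by simp
  then show ?thesis using assms(1) by (metis psd_iff)
qed

lemma sum_two:
  assumes "finite S" "i \<in> S" "j \<in> S" "i \<noteq> j" "\<And>k. k \<in> S \<Longrightarrow> k \<noteq> i \<Longrightarrow> k \<noteq> j \<Longrightarrow> g k = 0"
  shows "sum g S = g i + g j"
proof -
  have "sum g S = sum g {i,j}" using assms by (intro sum.mono_neutral_right) auto
  then show ?thesis using assms by simp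
qed

lemma sum2_delta:
  assumes "finite S" "finite T" "x \<in> S" "y \<in> T"
  shows "(\<Sum>a\<in>S. \<Sum>b\<in>T. if a = x \<and> b = y then f a b else 0) = f x y"
proof -
  have "(\<Sum>b\<in>T. if a = x \<and> b = y then f a b else 0) = (if a = x then f a y else 0)" for a
    using assms by (cases "a = x") auto
  then show ?thesis using assms by simp
qed

lemma psd_tr0:
  assumes M: "psd S M" and S: "finite S" and t: "tr S M = 0" and ij: "i \<in> S" "j \<in> S"
  shows "M i j = 0"
proof -
  have d: "\<forall>k\<in>S. M k k = 0"
    using t S psd_diag[OF M S] unfolding tr_def by (subst sum_nonneg_eq_0_iff[symmetric]) auto
  show ?thesis
  proof (cases "i = j")
    case True then show ?thesis using d ij by simp
  next
    case False
    have key: "0 \<le> t * M i j + cnj t * M j i" for t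
    proof -
      define v where "v = (\<lambda>k. if k = i then 1 else if k = j then t else 0)"
      have "qf S M v = (\<Sum>b\<in>S. cnj (v i) * M i b * v b) + (\<Sum>b\<in>S. cnj (v j) * M j b * v b)"
        unfolding qf_def using ij False S by (intro sum_two) (auto simp: v_def)
      also have "\<dots> = (cnj (v i) * M i i * v i + cnj (v i) * M i j * v j) + (cnj (v j) * M j i * v i + cnj (v j) * M j j * v j)"
        using ij False S by (intro arg_cong2[where f="(+)"] sum_two) (auto simp: v_def)
      also have "\<dots> = t * M i j + cnj t * M j i" using d ij False by (simp add: v_def)
      finally show ?thesis using M by (metis psd_iff)
    qed
    have a: "M i j + M j i = 0" using key[of 1] key[of "-1"] by (simp add: less_eq_complex_def complex_eq_iff)
    have b: "\<i> * M i j - \<i> * M j i = 0" using key[of "\<i>"] key[of "-\<i>"] by (simp add: less_eq_complex_def complex_eq_iff)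
    have "\<i> * M i j = \<i> * M j i" using b by (metis eq_iff_diff_eq_0)
    then have e: "M j i = M i j" by (simp only: mult_cancel_left complex_i_not_zero simp_thms)
    have "2 * M i j = 0" using a unfolding e by (simp only: mult_2)
    then show ?thesis by simp
  qed
qed


lemma app_ketbra: "finite S \<Longrightarrow> i \<in> S \<Longrightarrow> j \<in> S \<Longrightarrow> app S K (ketbra i j) u u' = K u u' i j"
  by (simp add: app_def ketbra_def if_distrib sum2_delta cong: if_cong)

lemma app_cong: "op_eq_on S \<rho> \<rho>' \<Longrightarrow> app S K \<rho> = app S K \<rho>'"
  unfolding app_def op_eq_on_def by (intro ext sum.cong refl) auto

lemma CP_psd:
  assumes K: "CP SI SO K" and r: "psd SI \<rho>" and fi: "finite SI" "finite SO"
  shows "psd SO (app SI K \<rho>)"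
proof -
  define \<sigma> :: "(nat \<times> _) op" where "\<sigma> = (\<lambda>(c,i) (c',i'). \<rho> i i')"
  have "psd ({..<1::nat} \<times> SI) (\<lambda>p q. \<rho> (snd p) (snd q))"
    using r fi by (intro psd_embed[where f=snd]) (auto simp: inj_on_def less_one)
  moreover have "(\<lambda>p q. \<rho> (snd p) (snd q)) = \<sigma>" by (auto simp: \<sigma>_def fun_eq_iff)
  ultimately have "psd ({..<1} \<times> SI) \<sigma>" by simp
  with K have "psd ({..<1} \<times> SO)
        (\<lambda>(c,u) (c',u'). \<Sum>i\<in>SI. \<Sum>i'\<in>SI. K u u' i i' * \<sigma> (c,i) (c',i'))"
    unfolding CP_def by blast
  then have "psd SO (\<lambda>u u'. (\<lambda>(c,u) (c',u'). \<Sum>i\<in>SI. \<Sum>i'\<in>SI. K u u' i i' * \<sigma> (c,i) (c',i')) (0::nat,u) (0::nat,u'))"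
    using fi by (intro psd_embed[where f="\<lambda>u. (0::nat,u)"]) (auto simp: inj_on_def)
  then show ?thesis by (simp add: app_def \<sigma>_def)
qed

lemma dens_const:
  assumes S: "finite S"
    and h: "\<And>\<xi>. density S \<xi> \<Longrightarrow> (\<Sum>x\<in>S. \<Sum>x'\<in>S. c x x' * \<xi> x x') = q"
  shows "\<And>x. x \<in> S \<Longrightarrow> c x x = q"
    and "\<And>x x'. x \<in> S \<Longrightarrow> x' \<in> S \<Longrightarrow> x \<noteq> x' \<Longrightarrow> c x x' = 0"
proof -
  fix x assume x: "x \<in> S"
  have "(\<Sum>a\<in>S. \<Sum>b\<in>S. c a b * ketbra x x a b) = q" by (rule h[OF density_ketbra[OF S x]])
  moreover have "(\<Sum>a\<in>S. \<Sum>b\<in>S. c a b * ketbra x x a b) = c x x"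
    using S x by (simp add: ketbra_def if_distrib sum2_delta cong: if_cong)
  ultimately show "c x x = q" by simp
next
  have diag: "c x x = q" if "x \<in> S" for x
  proof -
    have "(\<Sum>a\<in>S. \<Sum>b\<in>S. c a b * ketbra x x a b) = q" by (rule h[OF density_ketbra[OF S that]])
    moreover have "(\<Sum>a\<in>S. \<Sum>b\<in>S. c a b * ketbra x x a b) = c x x"
      using S that by (simp add: ketbra_def if_distrib sum2_delta cong: if_cong)
    ultimately show "c x x = q" by simp
  qed
  fix x x' assume x: "x \<in> S" and x': "x' \<in> S" and ne: "x \<noteq> x'"
  have key: "cnj t * c x x' + t * c x' x = 0" if tt: "t * cnj t = 1" for t
  proof -
    define w where "w = (\<lambda>k. if k = x then 1 else if k = x' then t else 0)"
    define D where "D = (\<lambda>k l. complex_of_real (1/2) * (w k * cnj (w l)))"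
    have "psd S D" unfolding D_def by (intro psd_scale psd_rank1) (simp add: less_eq_complex_def)
    moreover have "tr S D = 1"
    proof -
      have "tr S D = D x x + D x' x'" unfolding tr_def using S x x' ne by (intro sum_two) (auto simp: D_def w_def)
      also have "\<dots> = 1" using ne tt by (simp add: D_def w_def field_simps)
      finally show ?thesis .
    qed
    ultimately have "(\<Sum>a\<in>S. \<Sum>b\<in>S. c a b * D a b) = q" by (intro h) (simp add: density_def)
    moreover have "(\<Sum>a\<in>S. \<Sum>b\<in>S. c a b * D a b) = (\<Sum>b\<in>S. c x b * D x b) + (\<Sum>b\<in>S. c x' b * D x' b)"
      using S x x' ne by (intro sum_two) (auto simp: D_def w_def)
    moreover have "\<dots> = (c x x * D x x + c x x' * D x x') + (c x' x * D x' x + c x' x' * D x' x')"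
      using S x x' ne by (intro arg_cong2[where f="(+)"] sum_two) (auto simp: D_def w_def)
    ultimately have "(c x x * D x x + c x x' * D x x') + (c x' x * D x' x + c x' x' * D x' x') = q" by simp
    moreover have "D x x = 1/2" "D x x' = cnj t / 2" "D x' x = t / 2" "D x' x' = 1/2"
      using ne tt by (simp_all add: D_def w_def)
    ultimately have E: "(q * (1/2) + c x x' * (cnj t / 2)) + (c x' x * (t/2) + q * (1/2)) = q"
      using diag[OF x] diag[OF x'] by simp
    have "2 * ((q * (1/2) + c x x' * (cnj t / 2)) + (c x' x * (t/2) + q * (1/2))) = 2 * q" using E by simp
    then have "q + c x x' * cnj t + c x' x * t + q = 2 * q" by (simp add: algebra_simps)
    then show ?thesis by (simp add: algebra_simps)
  qed
  have a: "c x x' + c x' x = 0" using key[of 1] by simp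
  have b: "- \<i> * c x x' + \<i> * c x' x = 0" using key[of "\<i>"] by simp
  have "\<i> * c x' x = \<i> * c x x'" using b by (metis add.commute add_eq_0_iff minus_mult_left minus_minus)
  then have e: "c x' x = c x x'" by (simp only: mult_cancel_left complex_i_not_zero simp_thms)
  have "2 * c x x' = 0" using a unfolding e by (simp only: mult_2)
  then show "c x x' = 0" by simp
qed




definition Wt :: "(nat \<Rightarrow> nat \<Rightarrow> real) \<Rightarrow> nat \<Rightarrow> (nat \<Rightarrow> nat) \<Rightarrow> (nat \<Rightarrow> nat) \<Rightarrow> real" where
  "Wt P n bs ys = (\<Prod>j<n. P (bs j) (ys j))"

definition Econv :: "nat \<Rightarrow> (nat \<Rightarrow> real) \<Rightarrow> (nat \<Rightarrow> (nat,nat) kern) \<Rightarrow> (nat \<Rightarrow> nat \<Rightarrow> nat \<Rightarrow> real) \<Rightarrow> nat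
   \<Rightarrow> (nat \<times> (nat \<Rightarrow> nat), nat \<times> (nat \<Rightarrow> nat)) kern" where
  "Econv m p KA P n = (\<lambda>(a,bs) (a',bs') (x,ys) (x',ys'). if bs = bs' \<and> ys = ys' then
      (\<Sum>i<m. complex_of_real (p i * Wt (P i) n bs ys) * KA i a a' x x') else 0)"

lemma sum_pair: "sum f (A \<times> B) = (\<Sum>x\<in>A. \<Sum>y\<in>B. f (x,y))"
  by (subst sum.cartesian_product) simp

lemma LE:
  fixes G :: "(nat \<times> (nat \<Rightarrow> nat)) op" and n :: nat
  assumes fin: "finite SX" "finite SY"
  defines "Y \<equiv> PiE {..<n} (\<lambda>_. SY)"
  shows "(\<Sum>q\<in>SX \<times> Y. \<Sum>q'\<in>SX \<times> Y. Econv m p KA P n (a,bs) (a',bs') q q' * G q q') =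
    (if bs = bs' then (\<Sum>i<m. \<Sum>ys\<in>Y. complex_of_real (p i * Wt (P i) n bs ys) *
        (\<Sum>x\<in>SX. \<Sum>x'\<in>SX. KA i a a' x x' * G (x,ys) (x',ys))) else 0)"
proof -
  have finY: "finite Y" unfolding Y_def using fin by (simp add: finite_PiE)
  define c where "c i ys = complex_of_real (p i * Wt (P i) n bs ys)" for i ys
  have inner: "(\<Sum>q'\<in>SX \<times> Y. Econv m p KA P n (a,bs) (a',bs') (x,ys) q' * G (x,ys) q') =
      (\<Sum>x'\<in>SX. Econv m p KA P n (a,bs) (a',bs') (x,ys) (x',ys) * G (x,ys) (x',ys))"
    if "ys \<in> Y" for x ys
    using that fin finY by (intro sum_supp[where f="\<lambda>x'. (x',ys)"]) (auto simp: Econv_def inj_on_def)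
  have "(\<Sum>q\<in>SX \<times> Y. \<Sum>q'\<in>SX \<times> Y. Econv m p KA P n (a,bs) (a',bs') q q' * G q q') =
      (\<Sum>q\<in>SX \<times> Y. \<Sum>x'\<in>SX. Econv m p KA P n (a,bs) (a',bs') q (x',snd q) * G q (x',snd q))"
    using inner by (intro sum.cong refl) auto
  also have "\<dots> = (\<Sum>x\<in>SX. \<Sum>ys\<in>Y. \<Sum>x'\<in>SX. Econv m p KA P n (a,bs) (a',bs') (x,ys) (x',ys) * G (x,ys) (x',ys))"
    by (simp only: sum_pair snd_conv)
  also have "\<dots> = (if bs = bs' then (\<Sum>x\<in>SX. \<Sum>ys\<in>Y. \<Sum>x'\<in>SX. \<Sum>i<m. c i ys * (KA i a a' x x' * G (x,ys) (x',ys))) else 0)"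
    by (simp add: Econv_def c_def sum_distrib_right sum_distrib_left mult_ac)
  also have "(\<Sum>x\<in>SX. \<Sum>ys\<in>Y. \<Sum>x'\<in>SX. \<Sum>i<m. c i ys * (KA i a a' x x' * G (x,ys) (x',ys)))
      = (\<Sum>x\<in>SX. \<Sum>ys\<in>Y. \<Sum>i<m. \<Sum>x'\<in>SX. c i ys * (KA i a a' x x' * G (x,ys) (x',ys)))"
    by (intro sum.cong refl sum.swap)
  also have "\<dots> = (\<Sum>x\<in>SX. \<Sum>i<m. \<Sum>ys\<in>Y. \<Sum>x'\<in>SX. c i ys * (KA i a a' x x' * G (x,ys) (x',ys)))"
    by (intro sum.cong refl sum.swap)
  also have "\<dots> = (\<Sum>i<m. \<Sum>x\<in>SX. \<Sum>ys\<in>Y. \<Sum>x'\<in>SX. c i ys * (KA i a a' x x' * G (x,ys) (x',ys)))"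
    by (rule sum.swap)
  also have "\<dots> = (\<Sum>i<m. \<Sum>ys\<in>Y. \<Sum>x\<in>SX. \<Sum>x'\<in>SX. c i ys * (KA i a a' x x' * G (x,ys) (x',ys)))"
    by (intro sum.cong refl sum.swap)
  also have "\<dots> = (\<Sum>i<m. \<Sum>ys\<in>Y. c i ys * (\<Sum>x\<in>SX. \<Sum>x'\<in>SX. KA i a a' x x' * G (x,ys) (x',ys)))"
    by (simp add: sum_distrib_left)
  finally show ?thesis by (simp add: c_def)
qed

lemma cc_channel:
  assumes ch: "channel sY sB K" and TY: "styp sY = TC" and TB: "styp sB = TC"
  shows "\<And>b b' y y'. b \<in> labels sB \<Longrightarrow> b' \<in> labels sB \<Longrightarrow> y \<in> labels sY \<Longrightarrow> y' \<in> labels sY \<Longrightarrow>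
      K b b' y y' = (if b = b' \<and> y = y' then complex_of_real (Re (K b b y y)) else 0)"
    and "\<And>b y. b \<in> labels sB \<Longrightarrow> y \<in> labels sY \<Longrightarrow> 0 \<le> Re (K b b y y)"
    and "\<And>y. y \<in> labels sY \<Longrightarrow> (\<Sum>b\<in>labels sB. Re (K b b y y)) = 1"
proof -
  have fin: "finite (labels sY)" "finite (labels sB)" by (simp_all add: labels_def)
  have cp: "CP (labels sY) (labels sB) K" using ch by (simp add: channel_def)
  have diag: "0 \<le> K b b y y" if "b \<in> labels sB" "y \<in> labels sY" for b y
  proof -
    have "psd (labels sB) (app (labels sY) K (ketbra y y))"
      using cp fin by (intro CP_psd psd_ketbra)
    then have "0 \<le> app (labels sY) K (ketbra y y) b b" using fin that by (intro psd_diag)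
    then show ?thesis by (simp add: app_ketbra[OF fin(1) that(2) that(2)])
  qed
  show "\<And>b y. b \<in> labels sB \<Longrightarrow> y \<in> labels sY \<Longrightarrow> 0 \<le> Re (K b b y y)"
    using diag by (simp add: less_eq_complex_def)
  show "K b b' y y' = (if b = b' \<and> y = y' then complex_of_real (Re (K b b y y)) else 0)"
    if b: "b \<in> labels sB" "b' \<in> labels sB" and y: "y \<in> labels sY" "y' \<in> labels sY" for b b' y y'
  proof (cases "b = b'")
    case False
    have "app (labels sY) K (ketbra y y') b b' = 0" using ch TB False b unfolding channel_def by blast
    then show ?thesis using False by (simp add: app_ketbra[OF fin(1) y])
  next
    case bb: True
    show ?thesis
    proof (cases "y = y'")
      case False
      have "op_eq_on (labels sB) (app (labels sY) K (ketbra y y')) zero_op"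
        using ch TY False y unfolding channel_def by blast
      then have "app (labels sY) K (ketbra y y') b b' = 0" using b by (simp add: op_eq_on_def zero_op_def)
      then show ?thesis using False by (simp add: app_ketbra[OF fin(1) y])
    next
      case True
      then show ?thesis using bb diag[OF b(1) y(1)] by (simp add: less_eq_complex_def complex_eq_iff)
    qed
  qed
  show "(\<Sum>b\<in>labels sB. Re (K b b y y)) = 1" if y: "y \<in> labels sY" for y
  proof -
    have "tr (labels sB) (app (labels sY) K (ketbra y y)) = tr (labels sY) (ketbra y y)"
      using ch by (simp add: channel_def)
    also have "\<dots> = 1" using fin y by (simp add: tr_def ketbra_def)
    finally have "(\<Sum>b\<in>labels sB. K b b y y) = 1" by (simp add: tr_def app_ketbra[OF fin(1) y y])
    then have "Re (\<Sum>b\<in>labels sB. K b b y y) = 1" by simp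
    then show ?thesis by (simp add: Re_sum)
  qed
qed

lemma app_kt:
  assumes "finite SX" "finite SY"
  shows "app (SX \<times> SY) (ktensor K1 K2) (otimes \<xi> \<psi>) (a,b) (a',b') = app SX K1 \<xi> a a' * app SY K2 \<psi> b b'"
proof -
  have "app (SX \<times> SY) (ktensor K1 K2) (otimes \<xi> \<psi>) (a,b) (a',b') =
     (\<Sum>x\<in>SX. \<Sum>y\<in>SY. \<Sum>x'\<in>SX. \<Sum>y'\<in>SY. (K1 a a' x x' * \<xi> x x') * (K2 b b' y y' * \<psi> y y'))"
    by (simp add: app_def ktensor_def otimes_def sum_pair mult_ac)
  also have "\<dots> = (\<Sum>x\<in>SX. \<Sum>x'\<in>SX. \<Sum>y\<in>SY. \<Sum>y'\<in>SY. (K1 a a' x x' * \<xi> x x') * (K2 b b' y y' * \<psi> y y'))"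
    by (intro sum.cong refl sum.swap)
  also have "\<dots> = app SX K1 \<xi> a a' * app SY K2 \<psi> b b'"
    unfolding app_def sum_distrib_right unfolding sum_distrib_left by (simp add: mult_ac)
  finally show ?thesis .
qed

locale conv =
  fixes sX sY sA sB :: system and R :: "(nat \<times> nat, nat \<times> nat) kern"
    and m :: nat and p :: "nat \<Rightarrow> real" and KA KB :: "nat \<Rightarrow> (nat,nat) kern" and n :: nat
  assumes res: "resource sX sY sA sB R"
    and TCY: "styp sY = TC" and TCB: "styp sB = TC"
    and pnn: "\<And>i. i < m \<Longrightarrow> 0 \<le> p i" and psum: "(\<Sum>i<m. p i) = 1"
    and chA: "\<And>i. i < m \<Longrightarrow> channel sX sA (KA i)" and chB: "\<And>i. i < m \<Longrightarrow> channel sY sB (KB i)"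
    and dec: "\<And>\<rho>. op_eq_on (labels sA \<times> labels sB) (app (labels sX \<times> labels sY) R \<rho>)
          (\<lambda>u u'. \<Sum>i<m. complex_of_real (p i) * app (labels sX \<times> labels sY) (ktensor (KA i) (KB i)) \<rho> u u')"
    and npos: "0 < n"
begin

abbreviation "SX \<equiv> labels sX"
abbreviation "SY \<equiv> labels sY"
abbreviation "SA \<equiv> labels sA"
abbreviation "SB \<equiv> labels sB"
abbreviation "YY \<equiv> PiE {..<n} (\<lambda>_. SY)"
abbreviation "BB \<equiv> PiE {..<n} (\<lambda>_. SB)"

definition P :: "nat \<Rightarrow> nat \<Rightarrow> nat \<Rightarrow> real" where "P i b y = Re (KB i b b y y)"
definition hh :: "nat \<Rightarrow> nat op \<Rightarrow> nat \<Rightarrow> complex" where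
  "hh i \<psi> b = (\<Sum>y\<in>SY. complex_of_real (P i b y) * \<psi> y y)"

abbreviation "EC \<equiv> Econv m p KA P n"

lemma fin: "finite SX" "finite SY" "finite SA" "finite SB" "finite YY" "finite BB"
  by (simp_all add: labels_def finite_PiE)

lemma KBf: "i < m \<Longrightarrow> b \<in> SB \<Longrightarrow> b' \<in> SB \<Longrightarrow> y \<in> SY \<Longrightarrow> y' \<in> SY \<Longrightarrow>
      KB i b b' y y' = (if b = b' \<and> y = y' then complex_of_real (P i b y) else 0)"
  unfolding P_def by (rule cc_channel(1)[OF chB TCY TCB])

lemma Pnn: "i < m \<Longrightarrow> b \<in> SB \<Longrightarrow> y \<in> SY \<Longrightarrow> 0 \<le> P i b y"
  unfolding P_def by (rule cc_channel(2)[OF chB TCY TCB])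

lemma Psum: "i < m \<Longrightarrow> y \<in> SY \<Longrightarrow> (\<Sum>b\<in>SB. P i b y) = 1"
  unfolding P_def by (rule cc_channel(3)[OF chB TCY TCB])

lemma hh_sum: "i < m \<Longrightarrow> (\<Sum>b\<in>SB. hh i \<psi> b) = tr SY \<psi>"
proof -
  assume i: "i < m"
  have "(\<Sum>b\<in>SB. hh i \<psi> b) = (\<Sum>y\<in>SY. complex_of_real (\<Sum>b\<in>SB. P i b y) * \<psi> y y)"
    unfolding hh_def by (subst sum.swap) (simp add: sum_distrib_right)
  also have "\<dots> = tr SY \<psi>" using Psum[OF i] by (simp add: tr_def)
  finally show ?thesis .
qed

lemma app_KB: "i < m \<Longrightarrow> b \<in> SB \<Longrightarrow> b' \<in> SB \<Longrightarrow> app SY (KB i) \<psi> b b' = (if b = b' then hh i \<psi> b else 0)"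
proof -
  assume i: "i < m" and b: "b \<in> SB" "b' \<in> SB"
  have "app SY (KB i) \<psi> b b' = (\<Sum>y\<in>SY. \<Sum>y'\<in>SY. (if b = b' \<and> y = y' then complex_of_real (P i b y) else 0) * \<psi> y y')"
    unfolding app_def using KBf[OF i b] by (intro sum.cong refl) auto
  also have "\<dots> = (if b = b' then (\<Sum>y\<in>SY. \<Sum>y'\<in>SY. (if y = y' then complex_of_real (P i b y) * \<psi> y y' else 0)) else 0)"
    by (auto intro!: sum.cong)
  also have "\<dots> = (if b = b' then hh i \<psi> b else 0)"
    using fin by (simp add: hh_def)
  finally show ?thesis .
qed

lemma L0: "app (mlabels SX n SY) EC \<rho> (a,bs) (a',bs') = (if bs = bs' then (\<Sum>i<m. \<Sum>ys\<in>YY.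
      complex_of_real (p i * Wt (P i) n bs ys) * app SX (KA i) (\<lambda>x x'. \<rho> (x,ys) (x',ys)) a a') else 0)"
  unfolding app_def mlabels_def by (subst LE[OF fin(1,2)]) simp

lemma LP: "app (mlabels SX n SY) EC (prod_in \<xi> n \<psi>s) (a,bs) (a',bs') = (if bs = bs' then (\<Sum>i<m.
      complex_of_real (p i) * app SX (KA i) \<xi> a a' * (\<Prod>j<n. hh i (\<psi>s j) (bs j))) else 0)"
proof -
  have "(\<Sum>ys\<in>YY. complex_of_real (p i * Wt (P i) n bs ys) * app SX (KA i) (\<lambda>x x'. prod_in \<xi> n \<psi>s (x,ys) (x',ys)) a a')
      = complex_of_real (p i) * app SX (KA i) \<xi> a a' * (\<Prod>j<n. hh i (\<psi>s j) (bs j))" for i bs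
  proof -
    have a: "app SX (KA i) (\<lambda>x x'. prod_in \<xi> n \<psi>s (x,ys) (x',ys)) a a' =
        app SX (KA i) \<xi> a a' * (\<Prod>j<n. \<psi>s j (ys j) (ys j))" for ys
      by (simp add: app_def prod_in_def sum_distrib_left mult_ac)
    have b: "(\<Prod>j<n. hh i (\<psi>s j) (bs j)) = (\<Sum>ys\<in>YY. \<Prod>j<n. complex_of_real (P i (bs j) (ys j)) * \<psi>s j (ys j) (ys j))"
      unfolding hh_def using fin by (subst prod_sum_PiE) auto
    have c: "complex_of_real (p i * Wt (P i) n bs ys) * app SX (KA i) (\<lambda>x x'. prod_in \<xi> n \<psi>s (x,ys) (x',ys)) a a' =
       (complex_of_real (p i) * app SX (KA i) \<xi> a a') * (\<Prod>j<n. complex_of_real (P i (bs j) (ys j)) * \<psi>s j (ys j) (ys j))" for ys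
      unfolding a by (simp add: Wt_def prod.distrib mult_ac)
    show ?thesis unfolding c b by (simp add: sum_distrib_left)
  qed
  then show ?thesis by (simp add: L0 del: of_real_mult)
qed

end




lemma perm_PiE:
  assumes "\<pi> permutes {..<n}"
  shows "bij_betw (\<lambda>ys. ys \<circ> \<pi>) (PiE {..<n} (\<lambda>_. S)) (PiE {..<n} (\<lambda>_. S))"
proof -
  have pi': "inv \<pi> permutes {..<n}" using assms by (rule permutes_inv)
  have mem: "ys \<circ> \<sigma> \<in> PiE {..<n} (\<lambda>_. S)" if "ys \<in> PiE {..<n} (\<lambda>_. S)" "\<sigma> permutes {..<n}" for ys \<sigma>
  proof -
    have "\<forall>i<n. \<sigma> i < n" using permutes_in_image[OF that(2)] by auto
    then show ?thesis using that by (auto simp: PiE_iff extensional_def permutes_not_in)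
  qed
  show ?thesis
  proof (rule bij_betw_byWitness[where f'="\<lambda>ys. ys \<circ> inv \<pi>"])
    show "\<forall>a\<in>PiE {..<n} (\<lambda>_. S). a \<circ> \<pi> \<circ> inv \<pi> = a"
      using permutes_inv_o[OF assms] by (simp add: comp_assoc)
    show "\<forall>a\<in>PiE {..<n} (\<lambda>_. S). a \<circ> inv \<pi> \<circ> \<pi> = a"
      using permutes_inv_o[OF assms] by (simp add: comp_assoc)
    show "(\<lambda>ys. ys \<circ> \<pi>) ` PiE {..<n} (\<lambda>_. S) \<subseteq> PiE {..<n} (\<lambda>_. S)" using mem assms by auto
    show "(\<lambda>ys. ys \<circ> inv \<pi>) ` PiE {..<n} (\<lambda>_. S) \<subseteq> PiE {..<n} (\<lambda>_. S)" using mem pi' by auto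
  qed
qed

lemma sum_prod_sep: "(\<Sum>a\<in>A. \<Sum>b\<in>B. c * (f a * g b)) = (c::'a::comm_semiring_1) * ((\<Sum>a\<in>A. f a) * (\<Sum>b\<in>B. g b))"
proof -
  have "c * ((\<Sum>a\<in>A. f a) * (\<Sum>b\<in>B. g b)) = c * (\<Sum>a\<in>A. \<Sum>b\<in>B. f a * g b)" by (simp only: sum_product)
  also have "\<dots> = (\<Sum>a\<in>A. \<Sum>b\<in>B. c * (f a * g b))" by (simp only: sum_distrib_left)
  finally show ?thesis by simp
qed

lemma S0_lemma: "b \<in> SB \<Longrightarrow> 0 < (n::nat) \<Longrightarrow> {bs \<in> PiE {..<n} (\<lambda>_. SB). bs 0 = b} = PiE {..<n} (\<lambda>j. if j = 0 then {b} else SB)"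
proof (rule set_eqI)
  fix bs assume b: "b \<in> SB" and n: "0 < n"
  show "bs \<in> {bs \<in> PiE {..<n} (\<lambda>_. SB). bs 0 = b} \<longleftrightarrow> bs \<in> PiE {..<n} (\<lambda>j. if j = 0 then {b} else SB)"
  proof
    assume "bs \<in> {bs \<in> PiE {..<n} (\<lambda>_. SB). bs 0 = b}"
    then show "bs \<in> PiE {..<n} (\<lambda>j. if j = 0 then {b} else SB)" by (auto simp: PiE_iff)
  next
    assume h: "bs \<in> PiE {..<n} (\<lambda>j. if j = 0 then {b} else SB)"
    then have "bs 0 = b" using n by (auto simp: PiE_iff dest!: bspec[of _ _ 0])
    moreover have "bs \<in> PiE {..<n} (\<lambda>_. SB)" using h b by (auto simp: PiE_iff split: if_splits)
    ultimately show "bs \<in> {bs \<in> PiE {..<n} (\<lambda>_. SB). bs 0 = b}" by simp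
  qed
qed

lemma channel_X: "channel sX sA K \<Longrightarrow> styp sX = TC \<Longrightarrow> i \<in> labels sX \<Longrightarrow> j \<in> labels sX \<Longrightarrow> i \<noteq> j
   \<Longrightarrow> op_eq_on (labels sA) (app (labels sX) K (ketbra i j)) zero_op"
  unfolding channel_def by (elim conjE) (drule mp, assumption, blast)

lemma comp_perm_eq: "\<pi> permutes S \<Longrightarrow> (f \<circ> \<pi> = g \<circ> \<pi>) \<longleftrightarrow> f = g"
  by (metis permutes_surj surj_fun_eq)

context conv
begin

abbreviation "IN \<equiv> mlabels SX n SY"
abbreviation "OUT \<equiv> mlabels SA n SB"

lemma chA_cp: "i < m \<Longrightarrow> CP SX SA (KA i)" using chA by (simp add: channel_def)
lemma chA_tr: "i < m \<Longrightarrow> tr SA (app SX (KA i) \<xi>) = tr SX \<xi>" using chA by (simp add: channel_def)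

lemma ptrA_form: "ptrA_m SA (app IN EC (prod_in \<xi> n \<psi>s)) bs bs' = (if bs = bs' then
   (\<Sum>i<m. complex_of_real (p i) * tr SX \<xi> * (\<Prod>j<n. hh i (\<psi>s j) (bs j))) else 0)"
proof -
  have "ptrA_m SA (app IN EC (prod_in \<xi> n \<psi>s)) bs bs' = (if bs = bs' then
     (\<Sum>a\<in>SA. \<Sum>i<m. complex_of_real (p i) * app SX (KA i) \<xi> a a * (\<Prod>j<n. hh i (\<psi>s j) (bs j))) else 0)"
    by (simp add: ptrA_m_def LP)
  also have "\<dots> = (if bs = bs' then
     (\<Sum>i<m. complex_of_real (p i) * (\<Sum>a\<in>SA. app SX (KA i) \<xi> a a) * (\<Prod>j<n. hh i (\<psi>s j) (bs j))) else 0)"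
    by (subst sum.swap) (simp add: sum_distrib_left sum_distrib_right)
  also have "\<dots> = (if bs = bs' then
     (\<Sum>i<m. complex_of_real (p i) * tr SX \<xi> * (\<Prod>j<n. hh i (\<psi>s j) (bs j))) else 0)"
    using chA_tr by (simp add: tr_def)
  finally show ?thesis .
qed

lemma upd_eq: "(f(k := b) = g(k := b)) \<longleftrightarrow> (f(k := 0) = g(k := (0::nat)))"
  by (auto simp: fun_eq_iff)

lemma ptrB_form:
  assumes k: "k < n"
  shows "ptrB_m SB k (app IN EC (prod_in \<xi> n \<psi>s)) (a,bs) (a',bs') = (if bs(k := 0) = bs'(k := 0) then
   (\<Sum>i<m. complex_of_real (p i) * app SX (KA i) \<xi> a a' * tr SY (\<psi>s k) * (\<Prod>j\<in>{..<n}-{k}. hh i (\<psi>s j) (bs j))) else 0)"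
proof -
  have pr: "(\<Prod>j<n. hh i (\<psi>s j) ((bs(k := b)) j)) = hh i (\<psi>s k) b * (\<Prod>j\<in>{..<n}-{k}. hh i (\<psi>s j) (bs j))" for i b
  proof -
    have "(\<Prod>j<n. hh i (\<psi>s j) ((bs(k := b)) j)) = hh i (\<psi>s k) ((bs(k := b)) k) * (\<Prod>j\<in>{..<n}-{k}. hh i (\<psi>s j) ((bs(k := b)) j))"
      using k by (intro prod.remove) auto
    also have "(\<Prod>j\<in>{..<n}-{k}. hh i (\<psi>s j) ((bs(k := b)) j)) = (\<Prod>j\<in>{..<n}-{k}. hh i (\<psi>s j) (bs j))"
      by (intro prod.cong refl) auto
    finally show ?thesis by simp
  qed
  have cond: "\<And>b. (bs(k := b) = bs'(k := b)) = (bs(k := 0) = bs'(k := 0))" by (rule upd_eq)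
  show ?thesis
  proof (cases "bs(k := 0) = bs'(k := 0)")
    case False
    have c: "\<And>b. (bs(k := b) = bs'(k := b)) = False" using cond False by blast
    show ?thesis by (simp only: ptrB_m_def prod.case LP c False if_False sum.neutral_const)
  next
    case True
    have "ptrB_m SB k (app IN EC (prod_in \<xi> n \<psi>s)) (a,bs) (a',bs') =
     (\<Sum>b\<in>SB. \<Sum>i<m. complex_of_real (p i) * app SX (KA i) \<xi> a a' * (\<Prod>j<n. hh i (\<psi>s j) ((bs(k := b)) j)))"
      using cond True by (simp only: ptrB_m_def prod.case LP) simp
    also have "\<dots> = (\<Sum>b\<in>SB. \<Sum>i<m. complex_of_real (p i) * app SX (KA i) \<xi> a a' * (hh i (\<psi>s k) b * (\<Prod>j\<in>{..<n}-{k}. hh i (\<psi>s j) (bs j))))"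
      by (simp only: pr)
    also have "\<dots> = (\<Sum>i<m. complex_of_real (p i) * app SX (KA i) \<xi> a a' * (\<Sum>b\<in>SB. hh i (\<psi>s k) b) * (\<Prod>j\<in>{..<n}-{k}. hh i (\<psi>s j) (bs j)))"
      by (subst sum.swap) (simp add: sum_distrib_left sum_distrib_right mult_ac)
    also have "\<dots> = (\<Sum>i<m. complex_of_real (p i) * app SX (KA i) \<xi> a a' * tr SY (\<psi>s k) * (\<Prod>j\<in>{..<n}-{k}. hh i (\<psi>s j) (bs j)))"
      using hh_sum by simp
    finally show ?thesis using True by simp
  qed
qed

lemma tr_form: "tr OUT (app IN EC (prod_in \<xi> n \<psi>s)) = tr SX \<xi> * (\<Prod>j<n. tr SY (\<psi>s j))"
proof -
  have "tr OUT (app IN EC (prod_in \<xi> n \<psi>s)) = (\<Sum>a\<in>SA. \<Sum>bs\<in>BB. \<Sum>i<m.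
      complex_of_real (p i) * app SX (KA i) \<xi> a a * (\<Prod>j<n. hh i (\<psi>s j) (bs j)))"
    by (simp add: tr_def mlabels_def[of SA n SB] sum_pair LP)
  also have "\<dots> = (\<Sum>a\<in>SA. \<Sum>i<m. \<Sum>bs\<in>BB.
      complex_of_real (p i) * app SX (KA i) \<xi> a a * (\<Prod>j<n. hh i (\<psi>s j) (bs j)))"
    by (intro sum.cong refl sum.swap)
  also have "\<dots> = (\<Sum>i<m. \<Sum>a\<in>SA. \<Sum>bs\<in>BB.
      complex_of_real (p i) * app SX (KA i) \<xi> a a * (\<Prod>j<n. hh i (\<psi>s j) (bs j)))"
    by (rule sum.swap)
  also have "\<dots> = (\<Sum>i<m. complex_of_real (p i) * ((\<Sum>a\<in>SA. app SX (KA i) \<xi> a a) * (\<Sum>bs\<in>BB. \<Prod>j<n. hh i (\<psi>s j) (bs j))))"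
    by (simp only: sum_prod_sep mult.assoc)
  also have "\<dots> = (\<Sum>i<m. complex_of_real (p i) * (tr SX \<xi> * (\<Prod>j<n. tr SY (\<psi>s j))))"
  proof (intro sum.cong refl)
    fix i assume i: "i \<in> {..<m}"
    have "(\<Sum>bs\<in>BB. \<Prod>j<n. hh i (\<psi>s j) (bs j)) = (\<Prod>j<n. \<Sum>b\<in>SB. hh i (\<psi>s j) b)"
      using fin by (subst prod_sum_PiE) auto
    also have "\<dots> = (\<Prod>j<n. tr SY (\<psi>s j))" using hh_sum i by simp
    finally show "complex_of_real (p i) * ((\<Sum>a\<in>SA. app SX (KA i) \<xi> a a) * (\<Sum>bs\<in>BB. \<Prod>j<n. hh i (\<psi>s j) (bs j)))
       = complex_of_real (p i) * (tr SX \<xi> * (\<Prod>j<n. tr SY (\<psi>s j)))"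
      using chA_tr i by (simp add: tr_def)
  qed
  also have "\<dots> = tr SX \<xi> * (\<Prod>j<n. tr SY (\<psi>s j))"
    by (simp add: sum_distrib_right[symmetric] psum flip: of_real_sum)
  finally show ?thesis .
qed

lemma prod_split0: "0 < n \<Longrightarrow> prod F {..<n} = F 0 * prod F {1..<(n::nat)}"
proof -
  assume "0 < n"
  then have "{..<n} = insert 0 {1..<n}" by auto
  then show ?thesis by simp
qed

lemma red: "op_eq_on (SA \<times> SB) (ptr_rest SB n (app IN EC (prod_in \<xi> n \<psi>s)))
    (\<lambda>u u'. app (SX \<times> SY) R (otimes \<xi> (\<psi>s 0)) u u' * (\<Prod>j\<in>{1..<n}. tr SY (\<psi>s j)))"
  unfolding op_eq_on_def
proof (intro ballI)
  fix u u' assume u: "u \<in> SA \<times> SB" and u': "u' \<in> SA \<times> SB"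
  obtain a b where ab: "u = (a,b)" "a \<in> SA" "b \<in> SB" using u by auto
  obtain a' b' where ab': "u' = (a',b')" "a' \<in> SA" "b' \<in> SB" using u' by auto
  have rhs: "app (SX \<times> SY) R (otimes \<xi> (\<psi>s 0)) (a,b) (a',b') =
     (\<Sum>i<m. complex_of_real (p i) * (app SX (KA i) \<xi> a a' * (if b = b' then hh i (\<psi>s 0) b else 0)))"
  proof -
    have "app (SX \<times> SY) R (otimes \<xi> (\<psi>s 0)) (a,b) (a',b') =
      (\<Sum>i<m. complex_of_real (p i) * app (SX \<times> SY) (ktensor (KA i) (KB i)) (otimes \<xi> (\<psi>s 0)) (a,b) (a',b'))"
      using dec[of "otimes \<xi> (\<psi>s 0)"] ab ab' unfolding op_eq_on_def by blast
    also have "\<dots> = (\<Sum>i<m. complex_of_real (p i) * (app SX (KA i) \<xi> a a' * (if b = b' then hh i (\<psi>s 0) b else 0)))"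
      using fin ab ab' by (intro sum.cong refl) (simp add: app_kt app_KB)
    finally show ?thesis .
  qed
  have S0: "{bs \<in> BB. bs 0 = b} = PiE {..<n} (\<lambda>j. if j = 0 then {b} else SB)"
    using ab(3) npos by (rule S0_lemma)
  have lhs: "ptr_rest SB n (app IN EC (prod_in \<xi> n \<psi>s)) (a,b) (a',b') =
     (\<Sum>bs\<in>{bs \<in> BB. bs 0 = b}. (if b = b' then (\<Sum>i<m. complex_of_real (p i) * app SX (KA i) \<xi> a a' * (\<Prod>j<n. hh i (\<psi>s j) (bs j))) else 0))"
    unfolding ptr_rest_def prod.case
  proof (intro sum.cong refl)
    fix bs assume "bs \<in> {bs \<in> BB. bs 0 = b}"
    then have "bs 0 = b" by simp
    then have "(bs = bs(0 := b')) = (b = b')" by (auto simp: fun_eq_iff)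
    then show "app IN EC (prod_in \<xi> n \<psi>s) (a, bs) (a', bs(0 := b')) =
      (if b = b' then (\<Sum>i<m. complex_of_real (p i) * app SX (KA i) \<xi> a a' * (\<Prod>j<n. hh i (\<psi>s j) (bs j))) else 0)"
      by (simp only: LP)
  qed
  show "ptr_rest SB n (app IN EC (prod_in \<xi> n \<psi>s)) u u' =
        app (SX \<times> SY) R (otimes \<xi> (\<psi>s 0)) u u' * (\<Prod>j\<in>{1..<n}. tr SY (\<psi>s j))"
  proof (cases "b = b'")
    case False
    then show ?thesis unfolding ab(1) ab'(1) lhs rhs by simp
  next
    case True
    have ps: "(\<Sum>bs\<in>{bs \<in> BB. bs 0 = b}. \<Prod>j<n. hh i (\<psi>s j) (bs j)) = hh i (\<psi>s 0) b * (\<Prod>j\<in>{1..<n}. tr SY (\<psi>s j))"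
      if i: "i < m" for i
    proof -
      have "(\<Sum>bs\<in>{bs \<in> BB. bs 0 = b}. \<Prod>j<n. hh i (\<psi>s j) (bs j)) =
          (\<Prod>j<n. \<Sum>s\<in>(if j = 0 then {b} else SB). hh i (\<psi>s j) s)"
        unfolding S0 using fin by (subst prod_sum_PiE) auto
      also have "\<dots> = hh i (\<psi>s 0) b * (\<Prod>j\<in>{1..<n}. \<Sum>s\<in>SB. hh i (\<psi>s j) s)"
        using npos by (simp add: prod_split0)
      also have "\<dots> = hh i (\<psi>s 0) b * (\<Prod>j\<in>{1..<n}. tr SY (\<psi>s j))"
        using hh_sum[OF i] by simp
      finally show ?thesis .
    qed
    have "ptr_rest SB n (app IN EC (prod_in \<xi> n \<psi>s)) (a,b) (a',b') =
       (\<Sum>i<m. complex_of_real (p i) * app SX (KA i) \<xi> a a' * (\<Sum>bs\<in>{bs \<in> BB. bs 0 = b}. (\<Prod>j<n. hh i (\<psi>s j) (bs j))))"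
      unfolding lhs using True by (simp add: sum_distrib_left sum.swap[of _ "{..<m}"])
    also have "\<dots> = (\<Sum>i<m. complex_of_real (p i) * app SX (KA i) \<xi> a a' * (hh i (\<psi>s 0) b * (\<Prod>j\<in>{1..<n}. tr SY (\<psi>s j))))"
      using ps by simp
    also have "\<dots> = app (SX \<times> SY) R (otimes \<xi> (\<psi>s 0)) (a,b) (a',b') * (\<Prod>j\<in>{1..<n}. tr SY (\<psi>s j))"
      unfolding rhs using True by (simp add: sum_distrib_left sum_distrib_right mult_ac)
    finally show ?thesis using ab ab' by simp
  qed
qed

lemma clA: "styp sA = TC \<Longrightarrow> a \<in> SA \<Longrightarrow> a' \<in> SA \<Longrightarrow> a \<noteq> a' \<Longrightarrow> app IN EC \<rho> (a,bs) (a',bs') = 0"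
proof -
  assume t: "styp sA = TC" and a: "a \<in> SA" "a' \<in> SA" "a \<noteq> a'"
  have "app SX (KA i) \<rho>' a a' = 0" if "i < m" for i \<rho>'
    using chA[OF that] t a unfolding channel_def by blast
  then show ?thesis by (simp add: L0)
qed

lemma clB: "bs k \<noteq> bs' k \<Longrightarrow> app IN EC \<rho> (a,bs) (a',bs') = 0"
  by (auto simp: L0)

lemma clX: "styp sX = TC \<Longrightarrow> i \<in> SX \<Longrightarrow> j \<in> SX \<Longrightarrow> i \<noteq> j \<Longrightarrow>
    op_eq_on OUT (app IN EC (prod_in (ketbra i j) n \<psi>s)) zero_op"
proof -
  assume t: "styp sX = TC" and ij: "i \<in> SX" "j \<in> SX" "i \<noteq> j"
  have z: "app SX (KA l) (ketbra i j) a a' = 0" if "l < m" "a \<in> SA" "a' \<in> SA" for l a a'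
    using channel_X[OF chA[OF that(1)] t ij] that(2,3) unfolding op_eq_on_def zero_op_def by blast
  show ?thesis unfolding op_eq_on_def zero_op_def mlabels_def[of SA n SB]
  proof (intro ballI)
    fix u u' assume u: "u \<in> SA \<times> BB" and u': "u' \<in> SA \<times> BB"
    obtain a bs a' bs' where "u = (a,bs)" "u' = (a',bs')" "a \<in> SA" "a' \<in> SA" using u u' by auto
    then show "app IN EC (prod_in (ketbra i j) n \<psi>s) u u' = 0" by (simp add: LP z)
  qed
qed

lemma clY: "k < n \<Longrightarrow> i \<in> SY \<Longrightarrow> j \<in> SY \<Longrightarrow> i \<noteq> j \<Longrightarrow>
    op_eq_on OUT (app IN EC (prod_in \<xi> n (\<psi>s(k := ketbra i j)))) zero_op"
proof -
  assume k: "k < n" and ij: "i \<in> SY" "j \<in> SY" "i \<noteq> j"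
  have "hh l (ketbra i j) b = 0" for l b
    unfolding hh_def ketbra_def using ij by (intro sum.neutral) auto
  then have Z: "(\<Prod>j'<n. hh l ((\<psi>s(k := ketbra i j)) j') (bs j')) = 0" for l bs
    using k by (intro prod_zero) (auto intro!: bexI[of _ k])
  then show ?thesis unfolding op_eq_on_def zero_op_def mlabels_def[of SA n SB]
  proof (intro ballI)
    fix u u' assume u: "u \<in> SA \<times> BB" and u': "u' \<in> SA \<times> BB"
    obtain a bs a' bs' where "u = (a,bs)" "u' = (a',bs')" using u u' by auto
    then show "app IN EC (prod_in \<xi> n (\<psi>s(k := ketbra i j))) u u' = 0" by (simp add: LP Z del: fun_upd_apply)
  qed
qed

lemma Wt_perm: "\<pi> permutes {..<n} \<Longrightarrow> Wt Q n (bs \<circ> \<pi>) (ys \<circ> \<pi>) = Wt Q n bs ys"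
  unfolding Wt_def by (subst prod.permute[of \<pi> "{..<n}"]) (simp_all add: comp_def)

lemma clP: "\<pi> permutes {..<n} \<Longrightarrow> app IN EC (perm_op \<pi> \<rho>) (a,bs) (a',bs') = perm_op \<pi> (app IN EC \<rho>) (a,bs) (a',bs')"
proof -
  assume pi: "\<pi> permutes {..<n}"
  define F where "F i ys = app SX (KA i) (\<lambda>x x'. \<rho> (x,ys) (x',ys)) a a'" for i ys
  have "perm_op \<pi> (app IN EC \<rho>) (a,bs) (a',bs') = app IN EC \<rho> (a, bs \<circ> \<pi>) (a', bs' \<circ> \<pi>)"
    by (simp add: perm_op_def)
  also have "\<dots> = (if bs = bs' then (\<Sum>i<m. \<Sum>ys\<in>YY. complex_of_real (p i * Wt (P i) n (bs \<circ> \<pi>) ys) * F i ys) else 0)"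
    by (simp add: L0 F_def comp_perm_eq[OF pi])
  also have "\<dots> = (if bs = bs' then (\<Sum>i<m. \<Sum>ys\<in>YY. complex_of_real (p i * Wt (P i) n (bs \<circ> \<pi>) (ys \<circ> \<pi>)) * F i (ys \<circ> \<pi>)) else 0)"
  proof -
    have "(\<Sum>ys\<in>YY. complex_of_real (p i * Wt (P i) n (bs \<circ> \<pi>) ys) * F i ys) =
          (\<Sum>ys\<in>YY. complex_of_real (p i * Wt (P i) n (bs \<circ> \<pi>) (ys \<circ> \<pi>)) * F i (ys \<circ> \<pi>))" for i bs
      by (rule sum.reindex_bij_betw[OF perm_PiE[OF pi], symmetric])
    then show ?thesis by simp
  qed
  also have "\<dots> = (if bs = bs' then (\<Sum>i<m. \<Sum>ys\<in>YY. complex_of_real (p i * Wt (P i) n bs ys) * F i (ys \<circ> \<pi>)) else 0)"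
    by (simp add: Wt_perm[OF pi])
  also have "\<dots> = app IN EC (perm_op \<pi> \<rho>) (a,bs) (a',bs')"
    by (simp add: L0 F_def perm_op_def)
  finally show ?thesis ..
qed

lemma sum_delta2: "finite B \<Longrightarrow> b1 \<in> B \<Longrightarrow>
   (\<Sum>b\<in>B. g b * (if b1 = b \<and> b2 = b then X else 0)) = (if b1 = b2 then g b1 * (X::complex) else 0)"
proof (cases "b1 = b2")
  case True
  assume "finite B" "b1 \<in> B"
  then show ?thesis using True by (simp add: if_distrib[of "\<lambda>z. g _ * z"] cong: if_cong)
next
  case False
  then show ?thesis by (auto intro!: sum.neutral)
qed

lemma Wt_nn: "i < m \<Longrightarrow> bs \<in> BB \<Longrightarrow> ys \<in> YY \<Longrightarrow> 0 \<le> p i * Wt (P i) n bs ys"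
  unfolding Wt_def using pnn Pnn by (auto intro!: mult_nonneg_nonneg prod_nonneg simp: PiE_iff)

lemma clCP: "CP IN OUT EC"
  unfolding CP_def
proof (intro allI impI)
  fix k :: nat and \<sigma> :: "(nat \<times> (nat \<times> (nat \<Rightarrow> nat))) op"
  assume \<sigma>: "psd ({..<k} \<times> IN) \<sigma>"
  define f where "f ys = (\<lambda>(c::nat,x::nat). (c,(x,ys)))" for ys :: "nat \<Rightarrow> nat"
  define \<sigma>y where "\<sigma>y ys = (\<lambda>i j. \<sigma> (f ys i) (f ys j))" for ys
  define Out where "Out i ys = (\<lambda>(c::nat,a::nat) (c',a'). \<Sum>x\<in>SX. \<Sum>x'\<in>SX. KA i a a' x x' * \<sigma>y ys (c,x) (c',x'))" for i ys
  define N where "N i ys bs = (\<lambda>(c::nat,(a::nat,bs1::nat\<Rightarrow>nat)) (c',(a',bs2)). if bs1 = bs \<and> bs2 = bs then Out i ys (c,a) (c',a') else 0)" for i ys bs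
  define g where "g bs = (\<lambda>(c::nat,a::nat). (c,(a,bs)))" for bs :: "nat \<Rightarrow> nat"
  have fink: "finite ({..<k} \<times> IN)" "finite ({..<k} \<times> OUT)" using fin by (simp_all add: mlabels_def)
  have psd_y: "psd ({..<k} \<times> SX) (\<sigma>y ys)" if "ys \<in> YY" for ys
    unfolding \<sigma>y_def using \<sigma> fink that
    by (intro psd_embed[where f="f ys"]) (auto simp: f_def inj_on_def mlabels_def)
  have psd_out: "psd ({..<k} \<times> SA) (Out i ys)" if "i < m" "ys \<in> YY" for i ys
    using chA_cp[OF that(1)] psd_y[OF that(2)] unfolding CP_def Out_def by blast
  have psd_N: "psd ({..<k} \<times> OUT) (N i ys bs)" if "i < m" "ys \<in> YY" "bs \<in> BB" for i ys bs
  proof (rule psd_ext[where f="g bs"])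
    show "psd ({..<k} \<times> SA) (Out i ys)" by (rule psd_out[OF that(1,2)])
    show "finite ({..<k} \<times> OUT)" by (rule fink(2))
    show "inj_on (g bs) ({..<k} \<times> SA)" by (auto simp: g_def inj_on_def)
    show "g bs ` ({..<k} \<times> SA) \<subseteq> {..<k} \<times> OUT" using that by (auto simp: g_def mlabels_def)
    show "N i ys bs (g bs u) (g bs v) = Out i ys u v" if "u \<in> {..<k} \<times> SA" "v \<in> {..<k} \<times> SA" for u v
      by (cases u; cases v) (simp add: N_def g_def)
    show "N i ys bs s s' = 0" if "s \<in> {..<k} \<times> OUT" "s' \<in> {..<k} \<times> OUT" "s \<notin> g bs ` ({..<k} \<times> SA) \<or> s' \<notin> g bs ` ({..<k} \<times> SA)" for s s'
      using that by (cases s; cases s') (auto simp: N_def g_def mlabels_def image_iff)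
  qed
  define Tot where "Tot = (\<lambda>u v. \<Sum>i<m. \<Sum>ys\<in>YY. \<Sum>bs\<in>BB. complex_of_real (p i * Wt (P i) n bs ys) * N i ys bs u v)"
  have "psd ({..<k} \<times> OUT) Tot"
    unfolding Tot_def
    by (intro psd_sum psd_scale psd_N fin) (auto simp: less_eq_complex_def Wt_nn)
  moreover have "op_eq_on ({..<k} \<times> OUT) Tot
      (\<lambda>(c,u) (c',u'). \<Sum>i\<in>IN. \<Sum>i'\<in>IN. EC u u' i i' * \<sigma> (c,i) (c',i'))"
    unfolding op_eq_on_def
  proof (intro ballI)
    fix s s' assume s: "s \<in> {..<k} \<times> OUT" and s': "s' \<in> {..<k} \<times> OUT"
    obtain c a bs1 where sc: "s = (c,(a,bs1))" "bs1 \<in> BB" using s by (auto simp: mlabels_def)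
    obtain c' a' bs2 where sc': "s' = (c',(a',bs2))" using s' by (cases s') auto
    have "Tot s s' = (\<Sum>i<m. \<Sum>ys\<in>YY. (if bs1 = bs2 then complex_of_real (p i * Wt (P i) n bs1 ys) * Out i ys (c,a) (c',a') else 0))"
      unfolding Tot_def sc sc' N_def using sum_delta2[OF fin(6) sc(2)] by (simp del: of_real_mult)
    also have "\<dots> = (\<lambda>(c,u) (c',u'). \<Sum>i\<in>IN. \<Sum>i'\<in>IN. EC u u' i i' * \<sigma> (c,i) (c',i')) s s'"
      unfolding sc sc' using LE[OF fin(1,2), of m p KA P n a bs1 a' bs2 "\<lambda>q q'. \<sigma> (c,q) (c',q')"]
      by (simp add: mlabels_def Out_def \<sigma>y_def f_def)
    finally show "Tot s s' = (\<lambda>(c,u) (c',u'). \<Sum>i\<in>IN. \<Sum>i'\<in>IN. EC u u' i i' * \<sigma> (c,i) (c',i')) s s'" .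
  qed
  ultimately show "psd ({..<k} \<times> OUT) (\<lambda>(c,u) (c',u'). \<Sum>i\<in>IN. \<Sum>i'\<in>IN. EC u u' i i' * \<sigma> (c,i) (c',i'))"
    by (rule psd_cong[rotated])
qed

lemma sym: "sym_ext sX sY sA sB n R EC"
  unfolding sym_ext_def Let_def
proof (intro conjI allI impI ballI)
  show "CP IN OUT EC" by (rule clCP)
next
  fix \<xi> \<psi>s show "tr OUT (app IN EC (prod_in \<xi> n \<psi>s)) = tr SX \<xi> * (\<Prod>j<n. tr SY (\<psi>s j))" by (rule tr_form)
next
  fix \<xi> \<xi>' \<psi>s
  assume h: "density SX \<xi> \<and> density SX \<xi>' \<and> (\<forall>j<n. density SY (\<psi>s j))"
  then have "tr SX \<xi> = 1" "tr SX \<xi>' = 1" by (simp_all add: density_def)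
  then show "op_eq_on BB (ptrA_m SA (app IN EC (prod_in \<xi> n \<psi>s))) (ptrA_m SA (app IN EC (prod_in \<xi>' n \<psi>s)))"
    unfolding op_eq_on_def by (simp add: ptrA_form)
next
  fix k \<xi> \<psi>s \<phi> assume k: "k < n" and h: "density SX \<xi> \<and> (\<forall>j<n. density SY (\<psi>s j)) \<and> density SY \<phi>"
  then have t: "tr SY (\<psi>s k) = 1" "tr SY \<phi> = 1" by (simp_all add: density_def)
  have pr: "(\<Prod>j\<in>{..<n}-{k}. hh i ((\<psi>s(k := \<phi>)) j) (bs j)) = (\<Prod>j\<in>{..<n}-{k}. hh i (\<psi>s j) (bs j))" for i bs
    by (intro prod.cong refl) auto
  show "op_eq_on OUT (ptrB_m SB k (app IN EC (prod_in \<xi> n \<psi>s))) (ptrB_m SB k (app IN EC (prod_in \<xi> n (\<psi>s(k := \<phi>)))))"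
    unfolding op_eq_on_def
  proof (intro ballI)
    fix u u' assume "u \<in> OUT" "u' \<in> OUT"
    obtain a bs a' bs' where "u = (a,bs)" "u' = (a',bs')" by (cases u; cases u') auto
    then show "ptrB_m SB k (app IN EC (prod_in \<xi> n \<psi>s)) u u' = ptrB_m SB k (app IN EC (prod_in \<xi> n (\<psi>s(k := \<phi>)))) u u'"
      using t by (simp only: ptrB_form[OF k] pr fun_upd_same)
  qed
next
  fix \<rho> a bs a' bs'
  assume "styp sA = TC" and "(a, bs) \<in> OUT \<and> (a', bs') \<in> OUT \<and> a \<noteq> a'"
  then show "app IN EC \<rho> (a, bs) (a', bs') = 0" by (intro clA) (auto simp: mlabels_def)
next
  fix k \<rho> a bs a' bs'
  assume "(a, bs) \<in> OUT \<and> (a', bs') \<in> OUT \<and> bs k \<noteq> bs' k"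
  then show "app IN EC \<rho> (a, bs) (a', bs') = 0" by (intro clB[of bs k]) auto
next
  fix i j \<psi>s assume "styp sX = TC" "i \<in> SX" "j \<in> SX" "i \<noteq> j"
  then show "op_eq_on OUT (app IN EC (prod_in (ketbra i j) n \<psi>s)) zero_op" by (rule clX)
next
  fix k i j \<xi> \<psi>s assume "k < n" "i \<in> SY" "j \<in> SY" "i \<noteq> j"
  then show "op_eq_on OUT (app IN EC (prod_in \<xi> n (\<psi>s(k := ketbra i j)))) zero_op" by (rule clY)
next
  fix \<pi> \<rho> assume pi: "\<pi> permutes {..<n}"
  show "op_eq_on OUT (app IN EC (perm_op \<pi> \<rho>)) (perm_op \<pi> (app IN EC \<rho>))"
    unfolding op_eq_on_def
  proof (intro ballI)
    fix u u' :: "nat \<times> (nat \<Rightarrow> nat)"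
    obtain a bs a' bs' where "u = (a,bs)" "u' = (a',bs')" by (cases u; cases u') auto
    then show "app IN EC (perm_op \<pi> \<rho>) u u' = perm_op \<pi> (app IN EC \<rho>) u u'" using clP[OF pi] by simp
  qed
next
  fix \<xi> \<psi>s show "op_eq_on (SA \<times> SB) (ptr_rest SB n (app IN EC (prod_in \<xi> n \<psi>s)))
    (\<lambda>u u'. app (SX \<times> SY) R (otimes \<xi> (\<psi>s 0)) u u' * (\<Prod>j\<in>{1..<n}. tr SY (\<psi>s j)))" by (rule red)
qed

end

lemma converse:
  assumes res: "resource sX sY sA sB R" and TY: "styp sY = TC" and TB: "styp sB = TC"
    and L: "LOSR_free sX sY sA sB R"
  shows "\<exists>E. sym_ext sX sY sA sB (sdim sY) R E"
proof -
  obtain m :: nat and p KA KB where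
    h: "(\<forall>i<m. 0 \<le> p i)" "(\<Sum>i<m. p i) = 1" "(\<forall>i<m. channel sX sA (KA i) \<and> channel sY sB (KB i))"
       "(\<forall>\<rho>. op_eq_on (labels sA \<times> labels sB) (app (labels sX \<times> labels sY) R \<rho>)
          (\<lambda>u u'. \<Sum>i<m. complex_of_real (p i) * app (labels sX \<times> labels sY) (ktensor (KA i) (KB i)) \<rho> u u'))"
    using L unfolding LOSR_free_def by (elim exE conjE) blast
  have npos: "0 < sdim sY" using res by (simp add: resource_def valid_sys_def Let_def)
  interpret conv sX sY sA sB R m p KA KB "sdim sY"
    using h res TY TB npos by unfold_locales auto
  show ?thesis using sym by blast
qed




locale fwd =
  fixes sX sY sA sB :: system and R :: "(nat \<times> nat, nat \<times> nat) kern"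
    and E :: "(nat \<times> (nat \<Rightarrow> nat), nat \<times> (nat \<Rightarrow> nat)) kern"
  assumes res: "resource sX sY sA sB R" and TCY: "styp sY = TC" and TCB: "styp sB = TC"
    and ext: "sym_ext sX sY sA sB (sdim sY) R E"
begin

abbreviation "n \<equiv> sdim sY"
abbreviation "SX \<equiv> labels sX"
abbreviation "SY \<equiv> labels sY"
abbreviation "SA \<equiv> labels sA"
abbreviation "SB \<equiv> labels sB"
abbreviation "YY \<equiv> PiE {..<n} (\<lambda>_. SY)"
abbreviation "BB \<equiv> PiE {..<n} (\<lambda>_. SB)"
abbreviation "IN \<equiv> mlabels SX n SY"
abbreviation "OUT \<equiv> mlabels SA n SB"
abbreviation "EE \<equiv> app IN E"

definition idn :: "nat \<Rightarrow> nat" where "idn = (\<lambda>j. if j < n then j else undefined)"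
definition \<delta> :: "nat \<Rightarrow> nat op" where "\<delta> = (\<lambda>j. ketbra j j)"

lemma finD: "finite SX" "finite SY" "finite SA" "finite SB" "finite YY" "finite BB"
  by (simp_all add: labels_def finite_PiE)

lemma validD: "valid_sys sX" "valid_sys sY" "valid_sys sA" "valid_sys sB"
  using res by (simp_all add: resource_def Let_def)

lemma nposD: "0 < n" using validD(2) by (simp add: valid_sys_def)
lemma SYeq: "SY = {..<n}" by (simp add: labels_def)
lemma x0: "(0::nat) \<in> SX" using validD(1) by (simp add: valid_sys_def labels_def)

lemmas exts = ext[unfolded sym_ext_def Let_def]
lemmas ress = res[unfolded resource_def Let_def]

lemma E_cp: "CP IN OUT E" by (rule exts[THEN conjunct1])
lemma E_tr: "tr OUT (EE (prod_in \<xi> n \<psi>s)) = tr SX \<xi> * (\<Prod>j<n. tr SY (\<psi>s j))"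
  using exts[THEN conjunct2, THEN conjunct1] by blast
lemma E_nsA: "density SX \<xi> \<Longrightarrow> density SX \<xi>' \<Longrightarrow> (\<forall>j<n. density SY (\<psi>s j)) \<Longrightarrow>
   op_eq_on BB (ptrA_m SA (EE (prod_in \<xi> n \<psi>s))) (ptrA_m SA (EE (prod_in \<xi>' n \<psi>s)))"
  using exts[THEN conjunct2, THEN conjunct2, THEN conjunct1] by blast
lemma E_clA: "styp sA = TC \<Longrightarrow> (a,bs) \<in> OUT \<Longrightarrow> (a',bs') \<in> OUT \<Longrightarrow> a \<noteq> a' \<Longrightarrow> EE \<rho> (a,bs) (a',bs') = 0"
  using exts[THEN conjunct2, THEN conjunct2, THEN conjunct2, THEN conjunct2, THEN conjunct1] by blast
lemma E_clX: "styp sX = TC \<Longrightarrow> i \<in> SX \<Longrightarrow> j \<in> SX \<Longrightarrow> i \<noteq> j \<Longrightarrow> op_eq_on OUT (EE (prod_in (ketbra i j) n \<psi>s)) zero_op"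
  using exts[THEN conjunct2, THEN conjunct2, THEN conjunct2, THEN conjunct2, THEN conjunct2, THEN conjunct2, THEN conjunct1] by blast
lemma E_perm: "\<pi> permutes {..<n} \<Longrightarrow> op_eq_on OUT (EE (perm_op \<pi> \<rho>)) (perm_op \<pi> (EE \<rho>))"
  using exts[THEN conjunct2, THEN conjunct2, THEN conjunct2, THEN conjunct2, THEN conjunct2, THEN conjunct2, THEN conjunct2, THEN conjunct2, THEN conjunct1] by blast
lemma E_red: "op_eq_on (SA \<times> SB) (ptr_rest SB n (EE (prod_in \<xi> n \<psi>s)))
        (\<lambda>u u'. app (SX \<times> SY) R (otimes \<xi> (\<psi>s 0)) u u' * (\<Prod>j\<in>{1..<n}. tr SY (\<psi>s j)))"
  using exts[THEN conjunct2, THEN conjunct2, THEN conjunct2, THEN conjunct2, THEN conjunct2, THEN conjunct2, THEN conjunct2, THEN conjunct2, THEN conjunct2] by blast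

lemma R_clB: "a \<in> SA \<Longrightarrow> a' \<in> SA \<Longrightarrow> b \<in> SB \<Longrightarrow> b' \<in> SB \<Longrightarrow> b \<noteq> b' \<Longrightarrow> app (SX \<times> SY) R \<rho> (a,b) (a',b') = 0"
  using ress[THEN conjunct2, THEN conjunct2, THEN conjunct2, THEN conjunct2, THEN conjunct2, THEN conjunct2, THEN conjunct2, THEN conjunct2, THEN conjunct2, THEN conjunct1] TCB by blast
lemma R_clY: "i \<in> SY \<Longrightarrow> j \<in> SY \<Longrightarrow> i \<noteq> j \<Longrightarrow> op_eq_on (SA \<times> SB) (app (SX \<times> SY) R (otimes \<xi> (ketbra i j))) zero_op"
  using ress[THEN conjunct2, THEN conjunct2, THEN conjunct2, THEN conjunct2, THEN conjunct2, THEN conjunct2, THEN conjunct2, THEN conjunct2, THEN conjunct2, THEN conjunct2, THEN conjunct2] TCY by blast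

lemma idn_in: "idn \<in> YY" by (auto simp: idn_def PiE_iff labels_def extensional_def)

lemma YY_idn: "ys \<in> YY \<Longrightarrow> (ys = idn) \<longleftrightarrow> (\<forall>j<n. ys j = j)"
  by (auto simp: idn_def PiE_iff extensional_def fun_eq_iff)

lemma prod_delta: "ys \<in> YY \<Longrightarrow> ys' \<in> YY \<Longrightarrow>
   (\<Prod>j<n. \<delta> j (ys j) (ys' j)) = (if ys = idn \<and> ys' = idn then 1 else 0)"
proof -
  assume y: "ys \<in> YY" "ys' \<in> YY"
  show ?thesis
  proof (cases "ys = idn \<and> ys' = idn")
    case True
    then have "\<forall>j<n. ys j = j \<and> ys' j = j" using YY_idn y by blast
    then have "\<forall>j\<in>{..<n}. \<delta> j (ys j) (ys' j) = 1" by (simp add: \<delta>_def ketbra_def)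
    then have "(\<Prod>j<n. \<delta> j (ys j) (ys' j)) = 1" by (rule prod.neutral)
    moreover have "(if ys = idn \<and> ys' = idn then 1 else 0) = (1::complex)" using True by auto
    ultimately show ?thesis by (simp only:)
  next
    case False
    then obtain j where "j < n" "ys j \<noteq> j \<or> ys' j \<noteq> j" using YY_idn y by blast
    then have "(\<Prod>j<n. \<delta> j (ys j) (ys' j)) = 0" by (intro prod_zero) (auto simp: \<delta>_def ketbra_def intro!: bexI[of _ j])
    moreover have "(if ys = idn \<and> ys' = idn then 1 else 0) = (0::complex)" using False by auto
    ultimately show ?thesis by (simp only:)
  qed
qed

lemma prod_in_delta: "ys \<in> YY \<Longrightarrow> ys' \<in> YY \<Longrightarrow>
   prod_in \<xi> n \<delta> (x,ys) (x',ys') = (if ys = idn \<and> ys' = idn then \<xi> x x' else 0)"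
  by (simp add: prod_in_def prod_delta)

lemma LF: "EE (prod_in \<xi> n \<delta>) (a,bs) (a',bs') = (\<Sum>x\<in>SX. \<Sum>x'\<in>SX. E (a,bs) (a',bs') (x,idn) (x',idn) * \<xi> x x')"
proof -
  define t where "t q q' = E (a,bs) (a',bs') q q' * prod_in \<xi> n \<delta> q q'" for q q'
  have fIN: "finite (SX \<times> YY)" using finD by simp
  have sub: "(\<lambda>x. (x,idn)) ` SX \<subseteq> SX \<times> YY" using idn_in by auto
  have inj: "inj_on (\<lambda>x. (x,idn)) SX" by (auto simp: inj_on_def)
  have "EE (prod_in \<xi> n \<delta>) (a,bs) (a',bs') = (\<Sum>q\<in>SX \<times> YY. \<Sum>q'\<in>SX \<times> YY. t q q')"
    by (simp add: app_def mlabels_def t_def)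
  also have "\<dots> = (\<Sum>x\<in>SX. \<Sum>q'\<in>SX \<times> YY. t (x,idn) q')"
    using fIN inj sub by (intro sum_supp) (auto simp: t_def prod_in_delta image_iff intro!: sum.neutral)
  also have "\<dots> = (\<Sum>x\<in>SX. \<Sum>x'\<in>SX. t (x,idn) (x',idn))"
    using fIN inj sub by (intro sum.cong refl sum_supp) (auto simp: t_def prod_in_delta idn_in image_iff split: if_splits)
  also have "\<dots> = (\<Sum>x\<in>SX. \<Sum>x'\<in>SX. E (a,bs) (a',bs') (x,idn) (x',idn) * \<xi> x x')"
    by (simp add: t_def prod_in_delta idn_in)
  finally show ?thesis .
qed

lemma psd_pin: "psd SX \<xi> \<Longrightarrow> psd IN (prod_in \<xi> n \<delta>)"
proof -
  assume p: "psd SX \<xi>"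
  show ?thesis
  proof (rule psd_ext[where f="\<lambda>x. (x,idn)"])
    show "psd SX \<xi>" by (rule p)
    show "finite IN" using finD by (simp add: mlabels_def)
    show "inj_on (\<lambda>x. (x, idn)) SX" by (auto simp: inj_on_def)
    show "(\<lambda>x. (x, idn)) ` SX \<subseteq> IN" using idn_in by (auto simp: mlabels_def)
    show "prod_in \<xi> n \<delta> (i, idn) (j, idn) = \<xi> i j" for i j by (simp add: prod_in_delta idn_in)
    show "prod_in \<xi> n \<delta> s s' = 0" if "s \<in> IN" "s' \<in> IN" "s \<notin> (\<lambda>x. (x, idn)) ` SX \<or> s' \<notin> (\<lambda>x. (x, idn)) ` SX" for s s'
      using that by (cases s; cases s') (auto simp: mlabels_def prod_in_delta image_iff)
  qed
qed

definition \<Phi> :: "(nat \<Rightarrow> nat) \<Rightarrow> nat op \<Rightarrow> nat op" where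
  "\<Phi> bs \<xi> = (\<lambda>a a'. \<Sum>x\<in>SX. \<Sum>x'\<in>SX. E (a,bs) (a',bs) (x,idn) (x',idn) * \<xi> x x')"

lemma \<Phi>_LF: "\<Phi> bs \<xi> a a' = EE (prod_in \<xi> n \<delta>) (a,bs) (a',bs)"
  by (simp add: \<Phi>_def LF)

lemma \<Phi>_psd: "bs \<in> BB \<Longrightarrow> psd SX \<xi> \<Longrightarrow> psd SA (\<Phi> bs \<xi>)"
proof -
  assume bs: "bs \<in> BB" and p: "psd SX \<xi>"
  have "psd OUT (EE (prod_in \<xi> n \<delta>))"
    using E_cp psd_pin[OF p] finD by (intro CP_psd) (simp_all add: mlabels_def)
  then have "psd SA (\<lambda>a a'. EE (prod_in \<xi> n \<delta>) (a,bs) (a',bs))"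
    using finD bs by (intro psd_embed[where f="\<lambda>a. (a,bs)"]) (auto simp: inj_on_def mlabels_def)
  then show ?thesis by (simp add: \<Phi>_LF[abs_def])
qed

lemma \<Phi>_ketbra: "x \<in> SX \<Longrightarrow> x' \<in> SX \<Longrightarrow> \<Phi> bs (ketbra x x') a a' = E (a,bs) (a',bs) (x,idn) (x',idn)"
  using finD by (simp add: \<Phi>_def ketbra_def if_distrib sum2_delta cong: if_cong)

definition T0 :: "(nat \<Rightarrow> nat) \<Rightarrow> complex" where
  "T0 bs = (\<Sum>a\<in>SA. E (a,bs) (a,bs) (0,idn) (0,idn))"

lemma delta_dens: "\<forall>j<n. density SY (\<delta> j)"
  using finD by (auto simp: \<delta>_def SYeq intro!: density_ketbra)

lemma T_const: "bs \<in> BB \<Longrightarrow> density SX \<xi> \<Longrightarrow> tr SA (\<Phi> bs \<xi>) = T0 bs"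
proof -
  assume bs: "bs \<in> BB" and d: "density SX \<xi>"
  have "op_eq_on BB (ptrA_m SA (EE (prod_in \<xi> n \<delta>))) (ptrA_m SA (EE (prod_in (ketbra 0 0) n \<delta>)))"
    using E_nsA[OF d density_ketbra[OF finD(1) x0] delta_dens] .
  then have "ptrA_m SA (EE (prod_in \<xi> n \<delta>)) bs bs = ptrA_m SA (EE (prod_in (ketbra 0 0) n \<delta>)) bs bs"
    using bs unfolding op_eq_on_def by blast
  then show ?thesis
    by (simp add: ptrA_m_def tr_def T0_def \<Phi>_LF[symmetric] \<Phi>_ketbra[OF x0 x0])
qed

lemma T0_nn: "bs \<in> BB \<Longrightarrow> 0 \<le> T0 bs"
proof -
  assume bs: "bs \<in> BB"
  have d: "density SX (ketbra 0 0)" using density_ketbra[OF finD(1) x0] .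
  have "psd SA (\<Phi> bs (ketbra 0 0))" using \<Phi>_psd[OF bs] d by (simp add: density_def)
  then have "0 \<le> tr SA (\<Phi> bs (ketbra 0 0))" unfolding tr_def using finD by (intro sum_nonneg psd_diag) auto
  then show ?thesis using T_const[OF bs d] by simp
qed

definition pp :: "(nat \<Rightarrow> nat) \<Rightarrow> real" where "pp bs = Re (T0 bs)"

lemma T0_pp: "bs \<in> BB \<Longrightarrow> T0 bs = complex_of_real (pp bs)"
  using T0_nn unfolding pp_def by (auto simp: less_eq_complex_def complex_eq_iff)

lemma pp_nn: "bs \<in> BB \<Longrightarrow> 0 \<le> pp bs"
  using T0_nn unfolding pp_def by (auto simp: less_eq_complex_def)

lemma cfacts:
  assumes bs: "bs \<in> BB"
  shows "\<And>x. x \<in> SX \<Longrightarrow> (\<Sum>a\<in>SA. E (a,bs) (a,bs) (x,idn) (x,idn)) = T0 bs"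
    and "\<And>x x'. x \<in> SX \<Longrightarrow> x' \<in> SX \<Longrightarrow> x \<noteq> x' \<Longrightarrow> (\<Sum>a\<in>SA. E (a,bs) (a,bs) (x,idn) (x',idn)) = 0"
proof -
  have h: "(\<Sum>x\<in>SX. \<Sum>x'\<in>SX. (\<Sum>a\<in>SA. E (a,bs) (a,bs) (x,idn) (x',idn)) * \<xi> x x') = T0 bs"
    if d: "density SX \<xi>" for \<xi>
  proof -
    have "(\<Sum>x\<in>SX. \<Sum>x'\<in>SX. (\<Sum>a\<in>SA. E (a,bs) (a,bs) (x,idn) (x',idn)) * \<xi> x x')
        = (\<Sum>x\<in>SX. \<Sum>x'\<in>SX. \<Sum>a\<in>SA. E (a,bs) (a,bs) (x,idn) (x',idn) * \<xi> x x')"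
      by (simp add: sum_distrib_right)
    also have "\<dots> = (\<Sum>x\<in>SX. \<Sum>a\<in>SA. \<Sum>x'\<in>SX. E (a,bs) (a,bs) (x,idn) (x',idn) * \<xi> x x')"
      by (intro sum.cong refl sum.swap)
    also have "\<dots> = (\<Sum>a\<in>SA. \<Sum>x\<in>SX. \<Sum>x'\<in>SX. E (a,bs) (a,bs) (x,idn) (x',idn) * \<xi> x x')"
      by (rule sum.swap)
    also have "\<dots> = tr SA (\<Phi> bs \<xi>)" by (simp add: tr_def \<Phi>_def)
    also have "\<dots> = T0 bs" by (rule T_const[OF bs d])
    finally show ?thesis .
  qed
  show "\<And>x. x \<in> SX \<Longrightarrow> (\<Sum>a\<in>SA. E (a,bs) (a,bs) (x,idn) (x,idn)) = T0 bs"
    using dens_const(1)[OF finD(1) h] by blast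
  show "\<And>x x'. x \<in> SX \<Longrightarrow> x' \<in> SX \<Longrightarrow> x \<noteq> x' \<Longrightarrow> (\<Sum>a\<in>SA. E (a,bs) (a,bs) (x,idn) (x',idn)) = 0"
    using dens_const(2)[OF finD(1) h] by blast
qed

lemma tr_OUT: "tr OUT M = (\<Sum>bs\<in>BB. \<Sum>a\<in>SA. M (a,bs) (a,bs))"
  by (simp add: tr_def mlabels_def sum_pair) (rule sum.swap)

lemma pp_sum: "(\<Sum>bs\<in>BB. pp bs) = 1"
proof -
  have "tr OUT (EE (prod_in (ketbra 0 0) n \<delta>)) = tr SX (ketbra 0 0) * (\<Prod>j<n. tr SY (\<delta> j))" by (rule E_tr)
  also have "\<dots> = 1" using delta_dens density_ketbra[OF finD(1) x0] by (simp add: density_def)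
  finally have "(\<Sum>bs\<in>BB. \<Sum>a\<in>SA. EE (prod_in (ketbra 0 0) n \<delta>) (a,bs) (a,bs)) = 1" by (simp add: tr_OUT)
  then have "(\<Sum>bs\<in>BB. T0 bs) = 1"
    by (simp add: T0_def \<Phi>_LF[symmetric] \<Phi>_ketbra[OF x0 x0])
  then have "(\<Sum>bs\<in>BB. complex_of_real (pp bs)) = 1" using T0_pp by simp
  then show ?thesis by (metis of_real_eq_1_iff of_real_sum)
qed

lemma zero_E: "bs \<in> BB \<Longrightarrow> pp bs = 0 \<Longrightarrow> a \<in> SA \<Longrightarrow> a' \<in> SA \<Longrightarrow> x \<in> SX \<Longrightarrow> x' \<in> SX \<Longrightarrow>
   E (a,bs) (a',bs) (x,idn) (x',idn) = 0"
proof -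
  assume bs: "bs \<in> BB" and p0: "pp bs = 0" and a: "a \<in> SA" "a' \<in> SA" and x: "x \<in> SX" "x' \<in> SX"
  have h: "(\<Sum>z\<in>SX. \<Sum>z'\<in>SX. E (a,bs) (a',bs) (z,idn) (z',idn) * \<xi> z z') = 0" if d: "density SX \<xi>" for \<xi>
  proof -
    have "psd SA (\<Phi> bs \<xi>)" using \<Phi>_psd[OF bs] d by (simp add: density_def)
    moreover have "tr SA (\<Phi> bs \<xi>) = 0" using T_const[OF bs d] T0_pp[OF bs] p0 by simp
    ultimately have "\<Phi> bs \<xi> a a' = 0" by (rule psd_tr0[OF _ finD(3) _ a])
    then show ?thesis by (simp add: \<Phi>_def)
  qed
  show ?thesis
  proof (cases "x = x'")
    case True then show ?thesis using dens_const(1)[OF finD(1) h] x by blast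
  next
    case False then show ?thesis using dens_const(2)[OF finD(1) h] x by blast
  qed
qed

lemma sum_idn:
  assumes "\<And>x ys x' ys'. x \<in> SX \<Longrightarrow> ys \<in> YY \<Longrightarrow> x' \<in> SX \<Longrightarrow> ys' \<in> YY \<Longrightarrow> ys \<noteq> idn \<or> ys' \<noteq> idn \<Longrightarrow> G (x,ys) (x',ys') = 0"
  shows "(\<Sum>q\<in>IN. \<Sum>q'\<in>IN. G q q') = (\<Sum>x\<in>SX. \<Sum>x'\<in>SX. G (x,idn) (x',idn))"
proof -
  have fIN: "finite (SX \<times> YY)" using finD by simp
  have sub: "(\<lambda>x. (x,idn)) ` SX \<subseteq> SX \<times> YY" using idn_in by auto
  have inj: "inj_on (\<lambda>x. (x,idn)) SX" by (auto simp: inj_on_def)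
  have "(\<Sum>q\<in>IN. \<Sum>q'\<in>IN. G q q') = (\<Sum>x\<in>SX. \<Sum>q'\<in>SX \<times> YY. G (x,idn) q')"
    unfolding mlabels_def using fIN inj sub assms by (intro sum_supp) (auto simp: image_iff intro!: sum.neutral)
  also have "\<dots> = (\<Sum>x\<in>SX. \<Sum>x'\<in>SX. G (x,idn) (x',idn))"
    using fIN inj sub assms idn_in by (intro sum.cong refl sum_supp) (auto simp: image_iff)
  finally show ?thesis .
qed

definition KA0 :: "(nat \<Rightarrow> nat) \<Rightarrow> (nat,nat) kern" where
  "KA0 bs = (\<lambda>a a' x x'. E (a,bs) (a',bs) (x,idn) (x',idn) / complex_of_real (pp bs))"

lemma KA0_cp: assumes bs: "bs \<in> BB" and pos: "0 < pp bs" shows "CP SX SA (KA0 bs)"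
  unfolding CP_def
proof (intro allI impI)
  fix k :: nat and \<sigma> :: "(nat \<times> nat) op"
  assume \<sigma>: "psd ({..<k} \<times> SX) \<sigma>"
  define \<sigma>' where "\<sigma>' = (\<lambda>(c::nat,(x::nat,ys::nat\<Rightarrow>nat)) (c',(x',ys')). if ys = idn \<and> ys' = idn then \<sigma> (c,x) (c',x') else 0)"
  define f where "f = (\<lambda>(c::nat,x::nat). (c,(x,idn)))"
  define g where "g = (\<lambda>(c::nat,a::nat). (c,(a,bs)))"
  have "psd ({..<k} \<times> IN) \<sigma>'"
  proof (rule psd_ext[where f=f])
    show "psd ({..<k} \<times> SX) \<sigma>" by (rule \<sigma>)
    show "finite ({..<k} \<times> IN)" using finD by (simp add: mlabels_def)
    show "inj_on f ({..<k} \<times> SX)" by (auto simp: f_def inj_on_def)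
    show "f ` ({..<k} \<times> SX) \<subseteq> {..<k} \<times> IN" using idn_in by (auto simp: f_def mlabels_def)
    show "\<sigma>' (f i) (f j) = \<sigma> i j" if "i \<in> {..<k} \<times> SX" "j \<in> {..<k} \<times> SX" for i j
      by (cases i; cases j) (simp add: f_def \<sigma>'_def)
    show "\<sigma>' s s' = 0" if "s \<in> {..<k} \<times> IN" "s' \<in> {..<k} \<times> IN" "s \<notin> f ` ({..<k} \<times> SX) \<or> s' \<notin> f ` ({..<k} \<times> SX)" for s s'
      using that by (cases s; cases s') (auto simp: f_def \<sigma>'_def mlabels_def image_iff)
  qed
  then have O: "psd ({..<k} \<times> OUT) (\<lambda>(c,u) (c',u'). \<Sum>i\<in>IN. \<Sum>i'\<in>IN. E u u' i i' * \<sigma>' (c,i) (c',i'))"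
    using E_cp unfolding CP_def by blast
  have "psd ({..<k} \<times> SA) (\<lambda>u v. (\<lambda>(c,u) (c',u'). \<Sum>i\<in>IN. \<Sum>i'\<in>IN. E u u' i i' * \<sigma>' (c,i) (c',i')) (g u) (g v))"
    using O finD bs by (intro psd_embed[where f=g]) (auto simp: g_def inj_on_def mlabels_def)
  then have P1: "psd ({..<k} \<times> SA) (\<lambda>u v. complex_of_real (1 / pp bs) *
      (\<lambda>(c,u) (c',u'). \<Sum>i\<in>IN. \<Sum>i'\<in>IN. E u u' i i' * \<sigma>' (c,i) (c',i')) (g u) (g v))"
    using pos by (intro psd_scale) (simp_all add: less_eq_complex_def)
  show "psd ({..<k} \<times> SA) (\<lambda>(c,u) (c',u'). \<Sum>i\<in>SX. \<Sum>i'\<in>SX. KA0 bs u u' i i' * \<sigma> (c,i) (c',i'))"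
  proof (rule psd_cong[OF _ P1], unfold op_eq_on_def, intro ballI)
    fix s s' assume "s \<in> {..<k} \<times> SA" "s' \<in> {..<k} \<times> SA"
    obtain c a c' a' where s: "s = (c,a)" "s' = (c',a')" by (cases s; cases s') auto
    have "(\<Sum>i\<in>IN. \<Sum>i'\<in>IN. E (a,bs) (a',bs) i i' * \<sigma>' (c,i) (c',i')) =
        (\<Sum>x\<in>SX. \<Sum>x'\<in>SX. E (a,bs) (a',bs) (x,idn) (x',idn) * \<sigma>' (c,(x,idn)) (c',(x',idn)))"
      by (rule sum_idn) (auto simp: \<sigma>'_def)
    then show "complex_of_real (1 / pp bs) *
      (\<lambda>(c,u) (c',u'). \<Sum>i\<in>IN. \<Sum>i'\<in>IN. E u u' i i' * \<sigma>' (c,i) (c',i')) (g s) (g s') =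
      (\<lambda>(c,u) (c',u'). \<Sum>i\<in>SX. \<Sum>i'\<in>SX. KA0 bs u u' i i' * \<sigma> (c,i) (c',i')) s s'"
      unfolding s by (simp add: g_def \<sigma>'_def KA0_def sum_distrib_left divide_inverse mult_ac)
  qed
qed

lemma KA0_channel: assumes bs: "bs \<in> BB" and pos: "0 < pp bs" shows "channel sX sA (KA0 bs)"
  unfolding channel_def
proof (intro conjI allI impI ballI)
  show "valid_sys sX" "valid_sys sA" using validD by simp_all
  show "CP SX SA (KA0 bs)" by (rule KA0_cp[OF bs pos])
next
  fix \<xi>
  have "tr SA (app SX (KA0 bs) \<xi>) = (\<Sum>a\<in>SA. \<Sum>x\<in>SX. \<Sum>x'\<in>SX. E (a,bs) (a,bs) (x,idn) (x',idn) / complex_of_real (pp bs) * \<xi> x x')"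
    by (simp add: tr_def app_def KA0_def)
  also have "\<dots> = (\<Sum>x\<in>SX. \<Sum>a\<in>SA. \<Sum>x'\<in>SX. E (a,bs) (a,bs) (x,idn) (x',idn) / complex_of_real (pp bs) * \<xi> x x')"
    by (rule sum.swap)
  also have "\<dots> = (\<Sum>x\<in>SX. \<Sum>x'\<in>SX. \<Sum>a\<in>SA. E (a,bs) (a,bs) (x,idn) (x',idn) / complex_of_real (pp bs) * \<xi> x x')"
    by (intro sum.cong refl sum.swap)
  also have "\<dots> = (\<Sum>x\<in>SX. \<Sum>x'\<in>SX. (\<Sum>a\<in>SA. E (a,bs) (a,bs) (x,idn) (x',idn)) * \<xi> x x' / complex_of_real (pp bs))"
    by (simp add: sum_distrib_right sum_divide_distrib)
  also have "\<dots> = (\<Sum>x\<in>SX. \<Sum>x'\<in>SX. (if x' = x then T0 bs * \<xi> x x' / complex_of_real (pp bs) else 0))"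
    using cfacts[OF bs] by (intro sum.cong refl) auto
  also have "\<dots> = (\<Sum>x\<in>SX. T0 bs * \<xi> x x / complex_of_real (pp bs))"
    using finD by simp
  also have "\<dots> = tr SX \<xi>" using T0_pp[OF bs] pos by (simp add: tr_def)
  finally show "tr SA (app SX (KA0 bs) \<xi>) = tr SX \<xi>" .
next
  fix \<rho> i j assume t: "styp sA = TC" and ij: "i \<in> SA" "j \<in> SA" "i \<noteq> j"
  have "E (i,bs) (j,bs) (x,idn) (x',idn) = 0" if "x \<in> SX" "x' \<in> SX" for x x'
  proof -
    have "E (i,bs) (j,bs) (x,idn) (x',idn) = EE (ketbra (x,idn) (x',idn)) (i,bs) (j,bs)"
      using finD that idn_in by (subst app_ketbra) (auto simp: mlabels_def)
    also have "\<dots> = 0" using E_clA[OF t] ij bs by (auto simp: mlabels_def)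
    finally show ?thesis .
  qed
  then show "app SX (KA0 bs) \<rho> i j = 0" by (simp add: app_def KA0_def)
next
  fix i j assume t: "styp sX = TC" and ij: "i \<in> SX" "j \<in> SX" "i \<noteq> j"
  show "op_eq_on SA (app SX (KA0 bs) (ketbra i j)) zero_op"
    unfolding op_eq_on_def zero_op_def
  proof (intro ballI)
    fix a a' assume a: "a \<in> SA" "a' \<in> SA"
    have "E (a,bs) (a',bs) (i,idn) (j,idn) = EE (prod_in (ketbra i j) n \<delta>) (a,bs) (a',bs)"
      using \<Phi>_ketbra[OF ij(1,2)] \<Phi>_LF by simp
    also have "\<dots> = 0" using E_clX[OF t ij] a bs unfolding op_eq_on_def zero_op_def by (auto simp: mlabels_def)
    finally show "app SX (KA0 bs) (ketbra i j) a a' = 0" using finD ij by (simp add: app_ketbra KA0_def)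
  qed
qed

definition KB0 :: "(nat \<Rightarrow> nat) \<Rightarrow> (nat,nat) kern" where
  "KB0 bs = (\<lambda>u u' y y'. if u = u' \<and> y = y' \<and> u = bs y then 1 else 0)"

lemma bsy: "bs \<in> BB \<Longrightarrow> y \<in> SY \<Longrightarrow> bs y \<in> SB"
  by (auto simp: PiE_iff SYeq)

lemma KB0_cp: assumes bs: "bs \<in> BB" shows "CP SY SB (KB0 bs)"
  unfolding CP_def
proof (intro allI impI)
  fix k :: nat and \<sigma> :: "(nat \<times> nat) op"
  assume \<sigma>: "psd ({..<k} \<times> SY) \<sigma>"
  define N where "N y = (\<lambda>(c::nat,u::nat) (c',u'). if u = bs y \<and> u' = bs y then \<sigma> (c,y) (c',y) else 0)" for y
  have psdN: "psd ({..<k} \<times> SB) (N y)" if y: "y \<in> SY" for y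
  proof (rule psd_ext[where f="\<lambda>c. (c, bs y)" and T="{..<k}"])
    show "psd {..<k} (\<lambda>c c'. \<sigma> (c,y) (c',y))"
      using \<sigma> finD y by (intro psd_embed[where f="\<lambda>c. (c,y)"]) (auto simp: inj_on_def)
    show "finite ({..<k} \<times> SB)" using finD by simp
    show "inj_on (\<lambda>c. (c, bs y)) {..<k}" by (auto simp: inj_on_def)
    show "(\<lambda>c. (c, bs y)) ` {..<k} \<subseteq> {..<k} \<times> SB" using bsy[OF bs y] by auto
    show "N y (c, bs y) (c', bs y) = \<sigma> (c,y) (c',y)" for c c' by (simp add: N_def)
    show "N y s s' = 0" if "s \<in> {..<k} \<times> SB" "s' \<in> {..<k} \<times> SB" "s \<notin> (\<lambda>c. (c, bs y)) ` {..<k} \<or> s' \<notin> (\<lambda>c. (c, bs y)) ` {..<k}" for s s'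
      using that by (cases s; cases s') (auto simp: N_def image_iff)
  qed
  have P: "psd ({..<k} \<times> SB) (\<lambda>s s'. \<Sum>y\<in>SY. N y s s')"
    using finD psdN by (intro psd_sum) auto
  show "psd ({..<k} \<times> SB) (\<lambda>(c,u) (c',u'). \<Sum>i\<in>SY. \<Sum>i'\<in>SY. KB0 bs u u' i i' * \<sigma> (c,i) (c',i'))"
  proof (rule psd_cong[OF _ P], unfold op_eq_on_def, intro ballI)
    fix s s' assume "s \<in> {..<k} \<times> SB" "s' \<in> {..<k} \<times> SB"
    obtain c u c' u' where s: "s = (c,u)" "s' = (c',u')" by (cases s; cases s') auto
    have inner: "(\<Sum>i'\<in>SY. KB0 bs u u' i i' * \<sigma> (c,i) (c',i')) = N i (c,u) (c',u')" if "i \<in> SY" for i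
    proof (cases "u = u' \<and> u = bs i")
      case True
      then have "(\<Sum>i'\<in>SY. KB0 bs u u' i i' * \<sigma> (c,i) (c',i')) = (\<Sum>i'\<in>SY. if i = i' then \<sigma> (c,i) (c',i') else 0)"
        by (intro sum.cong refl) (auto simp: KB0_def)
      also have "\<dots> = \<sigma> (c,i) (c',i)" using finD that by simp
      finally show ?thesis using True by (simp add: N_def)
    next
      case False
      then show ?thesis by (auto simp: KB0_def N_def intro!: sum.neutral)
    qed
    show "(\<Sum>y\<in>SY. N y s s') = (\<lambda>(c,u) (c',u'). \<Sum>i\<in>SY. \<Sum>i'\<in>SY. KB0 bs u u' i i' * \<sigma> (c,i) (c',i')) s s'"
      unfolding s using inner by simp
  qed
qed

lemma KB0_channel: assumes bs: "bs \<in> BB" shows "channel sY sB (KB0 bs)"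
  unfolding channel_def
proof (intro conjI allI impI ballI)
  show "valid_sys sY" "valid_sys sB" using validD by simp_all
  show "CP SY SB (KB0 bs)" by (rule KB0_cp[OF bs])
next
  fix \<psi>
  have inner: "(\<Sum>y\<in>SY. \<Sum>y'\<in>SY. KB0 bs u u y y' * \<psi> y y') = (\<Sum>y\<in>SY. if u = bs y then \<psi> y y else 0)" for u
  proof (intro sum.cong refl)
    fix y assume "y \<in> SY"
    show "(\<Sum>y'\<in>SY. KB0 bs u u y y' * \<psi> y y') = (if u = bs y then \<psi> y y else 0)"
    proof (cases "u = bs y")
      case True
      then have "(\<Sum>y'\<in>SY. KB0 bs u u y y' * \<psi> y y') = (\<Sum>y'\<in>SY. if y = y' then \<psi> y y' else 0)"
        by (intro sum.cong refl) (auto simp: KB0_def)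
      then show ?thesis using True finD \<open>y \<in> SY\<close> by simp
    next
      case False
      then show ?thesis by (auto simp: KB0_def intro!: sum.neutral)
    qed
  qed
  have "tr SB (app SY (KB0 bs) \<psi>) = (\<Sum>u\<in>SB. \<Sum>y\<in>SY. if u = bs y then \<psi> y y else 0)"
    by (simp add: tr_def app_def inner)
  also have "\<dots> = (\<Sum>y\<in>SY. \<Sum>u\<in>SB. if u = bs y then \<psi> y y else 0)" by (rule sum.swap)
  also have "\<dots> = tr SY \<psi>" using finD bsy[OF bs] by (simp add: tr_def)
  finally show "tr SB (app SY (KB0 bs) \<psi>) = tr SY \<psi>" .
next
  fix \<rho> i j assume "styp sB = TC" "i \<in> SB" "j \<in> SB" "i \<noteq> j"
  then show "app SY (KB0 bs) \<rho> i j = 0" by (simp add: app_def KB0_def)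
next
  fix i j assume "styp sY = TC" "i \<in> SY" "j \<in> SY" "i \<noteq> j"
  then show "op_eq_on SB (app SY (KB0 bs) (ketbra i j)) zero_op"
    using finD by (simp add: op_eq_on_def zero_op_def app_ketbra KB0_def)
qed

definition bs0 :: "nat \<Rightarrow> nat" where "bs0 = (SOME bs. bs \<in> BB \<and> 0 < pp bs)"

lemma bs0: "bs0 \<in> BB \<and> 0 < pp bs0"
proof -
  have "\<exists>bs. bs \<in> BB \<and> 0 < pp bs"
  proof (rule ccontr)
    assume "\<not> ?thesis"
    then have "\<forall>bs\<in>BB. pp bs \<le> 0" by auto
    then have "(\<Sum>bs\<in>BB. pp bs) \<le> 0" by (intro sum_nonpos) auto
    then show False using pp_sum by simp
  qed
  then show ?thesis unfolding bs0_def by (rule someI_ex)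
qed

definition KA :: "(nat \<Rightarrow> nat) \<Rightarrow> (nat,nat) kern" where
  "KA bs = (if 0 < pp bs then KA0 bs else KA0 bs0)"

lemma KA_channel: "bs \<in> BB \<Longrightarrow> channel sX sA (KA bs)"
  using KA0_channel bs0 by (simp add: KA_def)

lemma K2: "bs \<in> BB \<Longrightarrow> a \<in> SA \<Longrightarrow> a' \<in> SA \<Longrightarrow> x \<in> SX \<Longrightarrow> x' \<in> SX \<Longrightarrow>
   complex_of_real (pp bs) * KA bs a a' x x' = E (a,bs) (a',bs) (x,idn) (x',idn)"
proof -
  assume h: "bs \<in> BB" "a \<in> SA" "a' \<in> SA" "x \<in> SX" "x' \<in> SX"
  show ?thesis
  proof (cases "0 < pp bs")
    case True then show ?thesis by (simp add: KA_def KA0_def)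
  next
    case False
    then have "pp bs = 0" using pp_nn[OF h(1)] by simp
    then show ?thesis using zero_E[OF h(1) _ h(2-5)] by simp
  qed
qed

end



lemma op_eq_onD: "op_eq_on S M N \<Longrightarrow> i \<in> S \<Longrightarrow> j \<in> S \<Longrightarrow> M i j = N i j"
  by (simp add: op_eq_on_def)

context fwd
begin

lemma K1:
  assumes a: "a \<in> SA" "a' \<in> SA" and b: "b \<in> SB" "b' \<in> SB" and x: "x \<in> SX" "x' \<in> SX"
    and y: "y \<in> SY" "y' \<in> SY"
  shows "R (a,b) (a',b') (x,y) (x',y') =
    (\<Sum>bs\<in>BB. if b = b' \<and> y = y' \<and> b = bs y then E (a,bs) (a',bs) (x,idn) (x',idn) else 0)"
proof -
  have ok: "otimes (ketbra x x') (ketbra y y') = ketbra (x,y) (x',y')"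
    by (auto simp: otimes_def ketbra_def fun_eq_iff)
  have Rk: "R (a,b) (a',b') (x,y) (x',y') = app (SX \<times> SY) R (otimes (ketbra x x') (ketbra y y')) (a,b) (a',b')"
    unfolding ok using finD x y by (subst app_ketbra) auto
  show ?thesis
  proof (cases "y = y' \<and> b = b'")
    case False
    have "R (a,b) (a',b') (x,y) (x',y') = 0"
    proof (cases "y = y'")
      case False
      have "op_eq_on (SA \<times> SB) (app (SX \<times> SY) R (otimes (ketbra x x') (ketbra y y'))) zero_op"
        by (rule R_clY[OF y False])
      from op_eq_onD[OF this, of "(a,b)" "(a',b')"]
      have "app (SX \<times> SY) R (otimes (ketbra x x') (ketbra y y')) (a,b) (a',b') = 0"
        using a b by (simp add: zero_op_def)
      then show ?thesis using Rk by simp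
    next
      case True
      then have bne: "b \<noteq> b'" using False by simp
      show ?thesis unfolding Rk by (rule R_clB[OF a b bne])
    qed
    moreover have "(\<Sum>bs\<in>BB. if b = b' \<and> y = y' \<and> b = bs y then E (a,bs) (a',bs) (x,idn) (x',idn) else 0) = 0"
      using False by (intro sum.neutral) auto
    ultimately show ?thesis by simp
  next
    case True
    then have yy: "y' = y" and bb: "b' = b" by auto
    define \<pi> where "\<pi> = Transposition.transpose 0 y"
    have pi: "\<pi> permutes {..<n}" using nposD y unfolding \<pi>_def SYeq by (intro permutes_swap_id) auto
    have pipi: "\<pi> \<circ> \<pi> = id" by (simp add: \<pi>_def)
    have cpp: "cs \<circ> \<pi> \<circ> \<pi> = cs" for cs :: "nat \<Rightarrow> nat" by (simp only: comp_assoc pipi comp_id)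
    define \<psi>s where "\<psi>s = (\<lambda>j. ketbra (\<pi> j) (\<pi> j))"
    define P0 where "P0 = prod_in (ketbra x x') n \<delta>"
    have pin: "prod_in (ketbra x x') n \<psi>s = perm_op \<pi> P0"
    proof -
      have "(\<Prod>j<n. \<psi>s j (ys j) (ys' j)) = (\<Prod>j<n. \<delta> j ((ys \<circ> \<pi>) j) ((ys' \<circ> \<pi>) j))" for ys ys'
        by (subst prod.permute[OF pi]) (simp add: \<psi>s_def \<delta>_def \<pi>_def comp_def)
      then show ?thesis by (auto simp: perm_op_def prod_in_def P0_def fun_eq_iff)
    qed
    have trs: "(\<Prod>j\<in>{1..<n}. tr SY (\<psi>s j)) = 1"
    proof (rule prod.neutral, rule ballI)
      fix j assume "j \<in> {1..<n}"
      then have "\<pi> j \<in> {..<n}" using permutes_in_image[OF pi] by auto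
      then show "tr SY (\<psi>s j) = 1" using finD by (simp add: \<psi>s_def tr_def ketbra_def SYeq)
    qed
    have ps0: "\<psi>s 0 = ketbra y y" by (simp add: \<psi>s_def \<pi>_def)
    have Red: "op_eq_on (SA \<times> SB) (ptr_rest SB n (EE (prod_in (ketbra x x') n \<psi>s)))
        (\<lambda>u u'. app (SX \<times> SY) R (otimes (ketbra x x') (\<psi>s 0)) u u' * (\<Prod>j\<in>{1..<n}. tr SY (\<psi>s j)))"
      by (rule E_red)
    have "ptr_rest SB n (EE (prod_in (ketbra x x') n \<psi>s)) (a,b) (a',b) =
        app (SX \<times> SY) R (otimes (ketbra x x') (\<psi>s 0)) (a,b) (a',b) * (\<Prod>j\<in>{1..<n}. tr SY (\<psi>s j))"
      using op_eq_onD[OF Red, of "(a,b)" "(a',b)"] a b by simp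
    then have R1: "R (a,b) (a',b') (x,y) (x',y') = ptr_rest SB n (EE (perm_op \<pi> P0)) (a,b) (a',b)"
      using Rk trs ps0 pin yy bb by simp
    have "ptr_rest SB n (EE (perm_op \<pi> P0)) (a,b) (a',b) = (\<Sum>bs\<in>{bs\<in>BB. bs 0 = b}. EE (perm_op \<pi> P0) (a,bs) (a',bs))"
      unfolding ptr_rest_def prod.case by (intro sum.cong refl) (auto simp: fun_upd_idem)
    also have "\<dots> = (\<Sum>bs\<in>{bs\<in>BB. bs 0 = b}. EE P0 (a, bs \<circ> \<pi>) (a', bs \<circ> \<pi>))"
    proof (intro sum.cong refl)
      fix bs assume "bs \<in> {bs\<in>BB. bs 0 = b}"
      then have "(a,bs) \<in> OUT" "(a',bs) \<in> OUT" using a by (auto simp: mlabels_def)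
      then show "EE (perm_op \<pi> P0) (a,bs) (a',bs) = EE P0 (a, bs \<circ> \<pi>) (a', bs \<circ> \<pi>)"
        using op_eq_onD[OF E_perm[OF pi, of P0]] by (simp add: perm_op_def)
    qed
    also have "\<dots> = (\<Sum>bs\<in>BB. if bs 0 = b then EE P0 (a, bs \<circ> \<pi>) (a', bs \<circ> \<pi>) else 0)"
      using finD by (simp add: sum.inter_filter)
    also have "\<dots> = (\<Sum>cs\<in>BB. if (cs \<circ> \<pi>) 0 = b then EE P0 (a, cs \<circ> \<pi> \<circ> \<pi>) (a', cs \<circ> \<pi> \<circ> \<pi>) else 0)"
      by (rule sum.reindex_bij_betw[OF perm_PiE[OF pi], symmetric])
    also have "\<dots> = (\<Sum>cs\<in>BB. if cs y = b then EE P0 (a, cs) (a', cs) else 0)"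
    proof (intro sum.cong refl)
      fix cs :: "nat \<Rightarrow> nat"
      have "(cs \<circ> \<pi>) 0 = cs y" by (simp add: \<pi>_def)
      then show "(if (cs \<circ> \<pi>) 0 = b then EE P0 (a, cs \<circ> \<pi> \<circ> \<pi>) (a', cs \<circ> \<pi> \<circ> \<pi>) else 0) =
          (if cs y = b then EE P0 (a, cs) (a', cs) else 0)" by (simp only: cpp)
    qed
    also have "\<dots> = (\<Sum>cs\<in>BB. if b = b' \<and> y = y' \<and> b = cs y then E (a,cs) (a',cs) (x,idn) (x',idn) else 0)"
      using yy bb \<Phi>_LF[symmetric] \<Phi>_ketbra[OF x] by (intro sum.cong refl) (auto simp: P0_def)
    finally show ?thesis using R1 by simp
  qed
qed

lemma main_eq:
  assumes u: "u \<in> SA \<times> SB" and u': "u' \<in> SA \<times> SB"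
  shows "app (SX \<times> SY) R \<rho> u u' =
     (\<Sum>bs\<in>BB. complex_of_real (pp bs) * app (SX \<times> SY) (ktensor (KA bs) (KB0 bs)) \<rho> u u')"
proof -
  obtain a b a' b' where ab: "u = (a,b)" "u' = (a',b')" "a \<in> SA" "b \<in> SB" "a' \<in> SA" "b' \<in> SB"
    using u u' by auto
  have e: "R (a,b) (a',b') q q' = (\<Sum>bs\<in>BB. complex_of_real (pp bs) * ktensor (KA bs) (KB0 bs) (a,b) (a',b') q q')"
    if q: "q \<in> SX \<times> SY" "q' \<in> SX \<times> SY" for q q'
  proof -
    obtain x y x' y' where qq: "q = (x,y)" "q' = (x',y')" "x \<in> SX" "y \<in> SY" "x' \<in> SX" "y' \<in> SY"
      using q by auto
    have "R (a,b) (a',b') q q' = (\<Sum>bs\<in>BB. if b = b' \<and> y = y' \<and> b = bs y then E (a,bs) (a',bs) (x,idn) (x',idn) else 0)"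
      unfolding qq(1,2) by (rule K1) (use ab qq in auto)
    also have "\<dots> = (\<Sum>bs\<in>BB. complex_of_real (pp bs) * ktensor (KA bs) (KB0 bs) (a,b) (a',b') q q')"
    proof (intro sum.cong refl)
      fix bs assume bs: "bs \<in> BB"
      have "complex_of_real (pp bs) * ktensor (KA bs) (KB0 bs) (a,b) (a',b') q q' =
          (complex_of_real (pp bs) * KA bs a a' x x') * KB0 bs b b' y y'"
        by (simp add: qq ktensor_def)
      also have "\<dots> = E (a,bs) (a',bs) (x,idn) (x',idn) * KB0 bs b b' y y'"
        using K2[OF bs ab(3) ab(5) qq(3) qq(5)] by simp
      also have "\<dots> = (if b = b' \<and> y = y' \<and> b = bs y then E (a,bs) (a',bs) (x,idn) (x',idn) else 0)"
        by (auto simp: KB0_def)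
      finally show "(if b = b' \<and> y = y' \<and> b = bs y then E (a,bs) (a',bs) (x,idn) (x',idn) else 0) =
          complex_of_real (pp bs) * ktensor (KA bs) (KB0 bs) (a,b) (a',b') q q'"
        by (rule sym)
    qed
    finally show ?thesis .
  qed
  have "app (SX \<times> SY) R \<rho> (a,b) (a',b') = (\<Sum>q\<in>SX \<times> SY. \<Sum>q'\<in>SX \<times> SY.
      (\<Sum>bs\<in>BB. complex_of_real (pp bs) * ktensor (KA bs) (KB0 bs) (a,b) (a',b') q q') * \<rho> q q')"
    unfolding app_def using e by (intro sum.cong refl) auto
  also have "\<dots> = (\<Sum>q\<in>SX \<times> SY. \<Sum>q'\<in>SX \<times> SY. \<Sum>bs\<in>BB.
      complex_of_real (pp bs) * (ktensor (KA bs) (KB0 bs) (a,b) (a',b') q q' * \<rho> q q'))"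
    by (simp add: sum_distrib_right sum_distrib_left mult_ac)
  also have "\<dots> = (\<Sum>q\<in>SX \<times> SY. \<Sum>bs\<in>BB. \<Sum>q'\<in>SX \<times> SY.
      complex_of_real (pp bs) * (ktensor (KA bs) (KB0 bs) (a,b) (a',b') q q' * \<rho> q q'))"
    by (intro sum.cong refl sum.swap)
  also have "\<dots> = (\<Sum>bs\<in>BB. \<Sum>q\<in>SX \<times> SY. \<Sum>q'\<in>SX \<times> SY.
      complex_of_real (pp bs) * (ktensor (KA bs) (KB0 bs) (a,b) (a',b') q q' * \<rho> q q'))"
    by (rule sum.swap)
  also have "\<dots> = (\<Sum>bs\<in>BB. complex_of_real (pp bs) * app (SX \<times> SY) (ktensor (KA bs) (KB0 bs)) \<rho> (a,b) (a',b'))"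
    by (simp add: app_def sum_distrib_left)
  finally show ?thesis using ab by simp
qed

lemma fwd_LOSR: "LOSR_free sX sY sA sB R"
proof -
  obtain h where h: "bij_betw h {..<card BB} BB"
    using ex_bij_betw_nat_finite[OF finD(6)] by (auto simp: atLeast0LessThan)
  have hin: "h i \<in> BB" if "i < card BB" for i using h that by (auto simp: bij_betw_def)
  show ?thesis
    unfolding LOSR_free_def
  proof (rule exI[of _ "card BB"], rule exI[of _ "pp \<circ> h"], rule exI[of _ "KA \<circ> h"], rule exI[of _ "KB0 \<circ> h"], intro conjI)
    show "\<forall>i<card BB. 0 \<le> (pp \<circ> h) i" using pp_nn hin by simp
  next
    show "(\<Sum>i<card BB. (pp \<circ> h) i) = 1"
      using sum.reindex_bij_betw[OF h, of pp] pp_sum by simp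
  next
    show "\<forall>i<card BB. channel sX sA ((KA \<circ> h) i) \<and> channel sY sB ((KB0 \<circ> h) i)"
      using KA_channel KB0_channel hin by simp
  next
    show "\<forall>\<rho>. op_eq_on (SA \<times> SB) (app (SX \<times> SY) R \<rho>)
          (\<lambda>u u'. \<Sum>i<card BB. complex_of_real ((pp \<circ> h) i) *
             app (SX \<times> SY) (ktensor ((KA \<circ> h) i) ((KB0 \<circ> h) i)) \<rho> u u')"
    proof
    fix \<rho>
    show "op_eq_on (SA \<times> SB) (app (SX \<times> SY) R \<rho>)
          (\<lambda>u u'. \<Sum>i<card BB. complex_of_real ((pp \<circ> h) i) *
             app (SX \<times> SY) (ktensor ((KA \<circ> h) i) ((KB0 \<circ> h) i)) \<rho> u u')"
      unfolding op_eq_on_def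
    proof (intro ballI)
      fix u u' assume u: "u \<in> SA \<times> SB" and u': "u' \<in> SA \<times> SB"
      have "(\<Sum>i<card BB. complex_of_real ((pp \<circ> h) i) * app (SX \<times> SY) (ktensor ((KA \<circ> h) i) ((KB0 \<circ> h) i)) \<rho> u u')
         = (\<Sum>bs\<in>BB. complex_of_real (pp bs) * app (SX \<times> SY) (ktensor (KA bs) (KB0 bs)) \<rho> u u')"
        using sum.reindex_bij_betw[OF h, of "\<lambda>bs. complex_of_real (pp bs) * app (SX \<times> SY) (ktensor (KA bs) (KB0 bs)) \<rho> u u'"]
        by simp
      then show "app (SX \<times> SY) R \<rho> u u' = (\<Sum>i<card BB. complex_of_real ((pp \<circ> h) i) *
             app (SX \<times> SY) (ktensor ((KA \<circ> h) i) ((KB0 \<circ> h) i)) \<rho> u u')"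
        using main_eq[OF u u'] by simp
    qed
    qed
  qed
qed

end

theorem proposition9:
  fixes sX sY sA sB :: system and R :: "(nat \<times> nat, nat \<times> nat) kern"
  assumes "resource sX sY sA sB R"
    and "styp sY = TC" and "styp sB = TC"
  shows "(\<exists>E. sym_ext sX sY sA sB (sdim sY) R E) \<longleftrightarrow> LOSR_free sX sY sA sB R"
proof
  assume "\<exists>E. sym_ext sX sY sA sB (sdim sY) R E"
  then obtain E where "sym_ext sX sY sA sB (sdim sY) R E" by blast
  then interpret fwd sX sY sA sB R E using assms by unfold_locales
  show "LOSR_free sX sY sA sB R" by (rule fwd_LOSR)
next
  assume "LOSR_free sX sY sA sB R"
  then show "\<exists>E. sym_ext sX sY sA sB (sdim sY) R E" using converse assms by blast
qed


end
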